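(* Let $K$ be a non-archimedean local field with $\mathrm{char}(K)=0$, and let $G$ be a discrete subgroup of $\mathrm{PSL}_2(K)$ with no $2$-torsion. If $g,h\in G$ are elliptic, then either $F(g)\cap F(h)=\varnothing$, or $\mathrm{Fix}(g)\subseteq\mathrm{Fix}(h)$, or $\mathrm{Fix}(h)\subseteq\mathrm{Fix}(g)$.
   Context: $\mathrm{PSL}_2(K)$ acts by isometries on its Bruhat--Tits tree $T_K$; an element is elliptic if it fixes a vertex of $T_K$, and $\mathrm{Fix}(g)$ is its fixed point set in $T_K$. For elliptic $g$, $F(g)=\bigcup\{\mathrm{Fix}(g^i): i\in\mathbb{Z},\ g^i\neq 1\}$. *)

theory Defs
  imports Main
begin

text \<open>The field K is a type of class field_char_0 (characteristic 0); v is a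
normalized discrete valuation, meaningful only on nonzero elements.\<close>

definition vint :: "('a::field \<Rightarrow> int) \<Rightarrow> 'a \<Rightarrow> bool" where
  "vint v x \<longleftrightarrow> x = 0 \<or> v x \<ge> 0"

definition vsmall :: "('a::field \<Rightarrow> int) \<Rightarrow> int \<Rightarrow> 'a \<Rightarrow> bool" where
  "vsmall v N x \<longleftrightarrow> x = 0 \<or> v x \<ge> N"

definition nonarch_local_field :: "('a::field_char_0 \<Rightarrow> int) \<Rightarrow> bool" where
  "nonarch_local_field v \<longleftrightarrow>
     (\<forall>x y. x \<noteq> 0 \<longrightarrow> y \<noteq> 0 \<longrightarrow> v (x * y) = v x + v y)
   \<and> (\<forall>x y. x \<noteq> 0 \<longrightarrow> y \<noteq> 0 \<longrightarrow> x + y \<noteq> 0 \<longrightarrow> v (x + y) \<ge> min (v x) (v y))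
   \<and> (\<exists>\<pi>. \<pi> \<noteq> 0 \<and> v \<pi> = 1)
   \<and> (\<exists>S. finite S \<and> (\<forall>x. vint v x \<longrightarrow> (\<exists>s\<in>S. vsmall v 1 (x - s))))
   \<and> (\<forall>f :: nat \<Rightarrow> 'a. (\<forall>N. \<exists>M. \<forall>m\<ge>M. \<forall>n\<ge>M. vsmall v N (f m - f n))
         \<longrightarrow> (\<exists>L. \<forall>N. \<exists>M. \<forall>n\<ge>M. vsmall v N (f n - L)))"

type_synonym 'a mat2 = "'a \<times> 'a \<times> 'a \<times> 'a"  (* (a,b,c,d) = [[a,b],[c,d]] *)
type_synonym 'a psl2 = "'a mat2 set"            (* class {A, -A} *)

definition sl2 :: "'a::field mat2 set" where
  "sl2 = {(a,b,c,d). a * d - b * c = 1}"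

definition mneg :: "'a::field mat2 \<Rightarrow> 'a mat2" where
  "mneg = (\<lambda>(a,b,c,d). (-a,-b,-c,-d))"

definition mmul :: "'a::field mat2 \<Rightarrow> 'a mat2 \<Rightarrow> 'a mat2" where
  "mmul = (\<lambda>(a,b,c,d) (e,f,g,h). (a*e+b*g, a*f+b*h, c*e+d*g, c*f+d*h))"

definition minv :: "'a::field mat2 \<Rightarrow> 'a mat2" where
  "minv = (\<lambda>(a,b,c,d). (d,-b,-c,a))"

definition mid :: "'a::field mat2" where
  "mid = (1,0,0,1)"

definition pcls :: "'a::field mat2 \<Rightarrow> 'a psl2" where
  "pcls A = {A, mneg A}"

definition PSL2 :: "'a::field psl2 set" where
  "PSL2 = pcls ` sl2"

definition pone :: "'a::field psl2" where
  "pone = pcls mid"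

definition pmul :: "'a::field psl2 \<Rightarrow> 'a psl2 \<Rightarrow> 'a psl2" where
  "pmul X Y = {mmul A B | A B. A \<in> X \<and> B \<in> Y}"

definition pinv :: "'a::field psl2 \<Rightarrow> 'a psl2" where
  "pinv X = minv ` X"

primrec ppow :: "'a::field psl2 \<Rightarrow> nat \<Rightarrow> 'a psl2" where
  "ppow X 0 = pone"
| "ppow X (Suc n) = pmul X (ppow X n)"

definition pzpow :: "'a::field psl2 \<Rightarrow> int \<Rightarrow> 'a psl2" where
  "pzpow X i = (if i \<ge> 0 then ppow X (nat i) else ppow (pinv X) (nat (- i)))"

definition subgroup_PSL2 :: "'a::field psl2 set \<Rightarrow> bool" where
  "subgroup_PSL2 G \<longleftrightarrow> G \<subseteq> PSL2 \<and> pone \<in> G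
     \<and> (\<forall>X\<in>G. \<forall>Y\<in>G. pmul X Y \<in> G) \<and> (\<forall>X\<in>G. pinv X \<in> G)"

definition near_id :: "('a::field \<Rightarrow> int) \<Rightarrow> int \<Rightarrow> 'a mat2 \<Rightarrow> bool" where
  "near_id v N = (\<lambda>(a,b,c,d). vsmall v N (a - 1) \<and> vsmall v N b \<and> vsmall v N c
                             \<and> vsmall v N (d - 1))"

definition discrete_subgroup :: "('a::field \<Rightarrow> int) \<Rightarrow> 'a psl2 set \<Rightarrow> bool" where
  "discrete_subgroup v G \<longleftrightarrow> subgroup_PSL2 G \<and>
     (\<exists>N. \<forall>X\<in>G. (\<exists>A\<in>X. near_id v N A) \<longrightarrow> X = pone)"

definition no_2_torsion :: "'a::field psl2 set \<Rightarrow> bool" where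
  "no_2_torsion G \<longleftrightarrow> (\<forall>X\<in>G. pmul X X = pone \<longrightarrow> X = pone)"

definition lattice_of :: "('a::field \<Rightarrow> int) \<Rightarrow> 'a \<times> 'a \<Rightarrow> 'a \<times> 'a \<Rightarrow> ('a \<times> 'a) set" where
  "lattice_of v e1 e2 = {(a * fst e1 + b * fst e2, a * snd e1 + b * snd e2) | a b.
                           vint v a \<and> vint v b}"

definition is_lattice :: "('a::field \<Rightarrow> int) \<Rightarrow> ('a \<times> 'a) set \<Rightarrow> bool" where
  "is_lattice v L \<longleftrightarrow> (\<exists>e1 e2. fst e1 * snd e2 - snd e1 * fst e2 \<noteq> 0 \<and> L = lattice_of v e1 e2)"

definition hclass :: "('a::field \<times> 'a) set \<Rightarrow> ('a \<times> 'a) set set" where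
  "hclass L = {(\<lambda>(x,y). (c * x, c * y)) ` L | c. c \<noteq> 0}"

definition BT_vertices :: "('a::field \<Rightarrow> int) \<Rightarrow> ('a \<times> 'a) set set set" where
  "BT_vertices v = {hclass L | L. is_lattice v L}"

definition mat_act :: "'a::field mat2 \<Rightarrow> 'a \<times> 'a \<Rightarrow> 'a \<times> 'a" where
  "mat_act = (\<lambda>(a,b,c,d) (x,y). (a * x + b * y, c * x + d * y))"

definition vert_act :: "'a::field mat2 \<Rightarrow> ('a \<times> 'a) set set \<Rightarrow> ('a \<times> 'a) set set" where
  "vert_act A X = (\<lambda>L. mat_act A ` L) ` X"

text \<open>Fixed vertices of g (PSL_2 acts on T_K without inversions, so the fixed
subtree is determined by its vertex set).\<close>

definition Fix :: "('a::field \<Rightarrow> int) \<Rightarrow> 'a psl2 \<Rightarrow> ('a \<times> 'a) set set set" where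
  "Fix v g = {X \<in> BT_vertices v. \<forall>A\<in>g. vert_act A X = X}"

definition elliptic :: "('a::field \<Rightarrow> int) \<Rightarrow> 'a psl2 \<Rightarrow> bool" where
  "elliptic v g \<longleftrightarrow> Fix v g \<noteq> {}"

definition Fall :: "('a::field \<Rightarrow> int) \<Rightarrow> 'a psl2 \<Rightarrow> ('a \<times> 'a) set set set" where
  "Fall v g = \<Union>{Fix v (pzpow g i) | i. pzpow g i \<noteq> pone}"

end

theory Submission
  imports Defs "HOL-Algebra.Group"
begin

definition mdet :: "'a::field mat2 \<Rightarrow> 'a" where
  "mdet = (\<lambda>(a,b,c,d). a*d - b*c)"
definition mtr :: "'a::field mat2 \<Rightarrow> 'a" where
  "mtr = (\<lambda>(a,b,c,d). a + d)"
definition smat :: "'a::field \<Rightarrow> 'a mat2" where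
  "smat k = (k,0,0,k)"
definition lin :: "'a::field \<Rightarrow> 'a \<Rightarrow> 'a mat2 \<Rightarrow> 'a mat2" where
  "lin x y = (\<lambda>(a,b,c,d). (x + y*a, y*b, y*c, x + y*d))"
primrec mpow :: "'a::field mat2 \<Rightarrow> nat \<Rightarrow> 'a mat2" where
  "mpow A 0 = mid"
| "mpow A (Suc n) = mmul A (mpow A n)"
definition inspan :: "'a::field mat2 \<Rightarrow> 'a mat2 \<Rightarrow> bool" where
  "inspan A M \<longleftrightarrow> (\<exists>x y. M = lin x y A)"
definition nonscalar :: "'a::field mat2 \<Rightarrow> bool" where
  "nonscalar A \<longleftrightarrow> (\<forall>k. A \<noteq> smat k)"

lemmas mdefs = mdet_def mtr_def smat_def lin_def mmul_def minv_def mid_def mneg_def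

lemma mmul_assoc: "mmul (mmul A B) C = mmul A (mmul B C)"
  by (cases A; cases B; cases C) (simp add: mdefs algebra_simps)
lemma mmul_mid[simp]: "mmul mid A = A" "mmul A mid = A"
  by (cases A; simp add: mdefs)+
lemma mdet_mmul: "mdet (mmul A B) = mdet A * mdet B"
  by (cases A; cases B) (simp add: mdefs algebra_simps)
lemma sl2_iff: "A \<in> sl2 \<longleftrightarrow> mdet A = 1"
  by (cases A) (simp add: sl2_def mdet_def)
lemma minv_left: "mdet A = 1 \<Longrightarrow> mmul (minv A) A = mid"
  by (cases A) (simp add: mdefs algebra_simps)
lemma minv_right: "mdet A = 1 \<Longrightarrow> mmul A (minv A) = mid"
  by (cases A) (simp add: mdefs algebra_simps)
lemma mdet_minv[simp]: "mdet (minv A) = mdet A"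
  by (cases A) (simp add: mdefs algebra_simps)
lemma mdet_mneg[simp]: "mdet (mneg A) = mdet A"
  by (cases A) (simp add: mdefs algebra_simps)
lemma mneg_mneg[simp]: "mneg (mneg A) = A"
  by (cases A) (simp add: mdefs)
lemma mmul_mneg: "mmul (mneg A) B = mneg (mmul A B)" "mmul A (mneg B) = mneg (mmul A B)"
  by (cases A; cases B; simp add: mdefs algebra_simps)+
lemma minv_mneg: "minv (mneg A) = mneg (minv A)"
  by (cases A) (simp add: mdefs)
lemma minv_mmul: "minv (mmul A B) = mmul (minv B) (minv A)"
  by (cases A; cases B) (simp add: mdefs algebra_simps)
lemma mdet_mid[simp]: "mdet mid = 1"
  by (simp add: mdefs)
lemma mneg_neq: "mneg A \<noteq> (A::'a::field_char_0 mat2) \<or> A = (0,0,0,0)"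
  by (cases A) (auto simp: mdefs)

lemma pcls_mneg[simp]: "pcls (mneg A) = pcls A"
  by (auto simp: pcls_def)
lemma pmul_pcls: "pmul (pcls A) (pcls B) = pcls (mmul A B)"
proof -
  have "pmul (pcls A) (pcls B) = {mmul A B, mmul A (mneg B), mmul (mneg A) B, mmul (mneg A) (mneg B)}"
    unfolding pmul_def pcls_def by blast
  then show ?thesis by (auto simp: mmul_mneg pcls_def)
qed
lemma pinv_pcls: "pinv (pcls A) = pcls (minv A)"
  unfolding pinv_def pcls_def by (auto simp: minv_mneg)
lemma pcls_eq: "pcls A = pcls B \<longleftrightarrow> A = B \<or> A = mneg B"
proof
  assume "pcls A = pcls B"
  moreover have "A \<in> pcls A" by (simp add: pcls_def)
  ultimately have "A \<in> pcls B" by simp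
  then show "A = B \<or> A = mneg B" by (simp add: pcls_def)
next
  assume "A = B \<or> A = mneg B"
  then show "pcls A = pcls B" by auto
qed
lemma PSL2_E: "X \<in> PSL2 \<Longrightarrow> (\<And>A. mdet A = 1 \<Longrightarrow> X = pcls A \<Longrightarrow> P) \<Longrightarrow> P"
  unfolding PSL2_def by (auto simp: sl2_iff)
lemma pcls_PSL2: "mdet A = 1 \<Longrightarrow> pcls A \<in> PSL2"
  unfolding PSL2_def by (auto simp: sl2_iff)

lemma mpow_mdet: "mdet A = 1 \<Longrightarrow> mdet (mpow A n) = 1"
  by (induction n) (auto simp: mdet_mmul)
lemma ppow_pcls: "ppow (pcls A) n = pcls (mpow A n)"
  by (induction n) (auto simp: pone_def pmul_pcls)

definition mzpow :: "'a::field mat2 \<Rightarrow> int \<Rightarrow> 'a mat2" where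
  "mzpow A i = (if i \<ge> 0 then mpow A (nat i) else mpow (minv A) (nat (-i)))"
lemma pzpow_pcls: "pzpow (pcls A) i = pcls (mzpow A i)"
  by (simp add: pzpow_def mzpow_def ppow_pcls pinv_pcls)

lemma lin_mid: "lin x 0 A = smat x"
  by (cases A) (simp add: mdefs)
lemma inspan_self: "inspan A A"
  unfolding inspan_def by (rule exI[of _ 0], rule exI[of _ 1], cases A, simp add: mdefs)
lemma inspan_mid: "inspan A mid"
  unfolding inspan_def by (rule exI[of _ 1], rule exI[of _ 0], cases A, simp add: mdefs)
lemma inspan_mul: "inspan A M \<Longrightarrow> inspan A N \<Longrightarrow> mdet A = 1 \<Longrightarrow> inspan A (mmul M N)"
  unfolding inspan_def
proof (elim exE)
  fix x y x' y' assume M: "M = lin x y A" and N: "N = lin x' y' A" and d: "mdet A = 1"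
  obtain a b c e where A: "A = (a,b,c,e)" by (cases A) auto
  show "\<exists>x y. mmul M N = lin x y A"
    apply (rule exI[of _ "x*x' - y*y'"], rule exI[of _ "x*y' + y*x' + y*y'*(a+e)"])
    using d apply (simp add: M N A mdefs)
    by algebra
qed

lemma inspan_minv: "mdet A = 1 \<Longrightarrow> inspan A (minv A)"
  unfolding inspan_def
  by (rule exI[of _ "mtr A"], rule exI[of _ "-1"], cases A, simp add: mdefs)
lemma inspan_mpow: "mdet A = 1 \<Longrightarrow> inspan A (mpow A n)"
  by (induction n) (auto simp: inspan_mid inspan_mul inspan_self)
lemma inspan_trans: "inspan A M \<Longrightarrow> inspan M N \<Longrightarrow> inspan A N"
  unfolding inspan_def
proof (elim exE)
  fix x y x' y' assume M: "M = lin x y A" and N: "N = lin x' y' M"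
  show "\<exists>x y. N = lin x y A"
    by (rule exI[of _ "x' + y'*x"], rule exI[of _ "y'*y"], cases A) (simp add: M N mdefs algebra_simps)
qed
lemma inspan_mpow_minv: "mdet A = 1 \<Longrightarrow> inspan A (mpow (minv A) n)"
  using inspan_minv inspan_mpow[of "minv A" n] inspan_trans mdet_minv by metis
lemma inspan_mzpow: "mdet A = 1 \<Longrightarrow> inspan A (mzpow A i)"
  by (simp add: mzpow_def inspan_mpow inspan_mpow_minv)
lemma inspan_comm: "inspan A M \<Longrightarrow> inspan A N \<Longrightarrow> mmul M N = mmul N M"
  unfolding inspan_def by (cases A) (auto simp: mdefs algebra_simps)
lemma lin_eqI: "p = x + y*a \<Longrightarrow> q = y*b \<Longrightarrow> r = y*c \<Longrightarrow> s = x + y*d \<Longrightarrow> (p,q,r,s) = lin x y (a,b,c,d)"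
  by (simp add: lin_def)

lemma centralizer:
  assumes ns: "nonscalar A" and c: "mmul A M = mmul M A"
  shows "inspan A M"
proof -
  obtain a b cc d where A: "A = (a,b,cc,d)" by (cases A) auto
  obtain p q r s where M: "M = (p,q,r,s)" by (cases M) auto
  have c1: "a*p + b*r = p*a + q*cc" and c2: "a*q + b*s = p*b + q*d" and c3: "cc*p + d*r = r*a + s*cc"
    using c by (simp_all add: A M mmul_def)
  have e1: "b*r = cc*q" using c1 by algebra
  have e2: "q*(a-d) = b*(p-s)" using c2 by algebra
  have e3: "cc*(p-s) = r*(a-d)" using c3 by algebra
  have "b \<noteq> 0 \<or> cc \<noteq> 0 \<or> a \<noteq> d"
    using ns by (auto simp: nonscalar_def A smat_def)
  then show ?thesis
  proof (elim disjE)
    assume b: "b \<noteq> 0"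
    define y where "y = q/b"
    have 2: "q = y*b" using b by (simp add: y_def)
    have "y*cc = (cc*q)/b" by (simp add: y_def)
    also have "\<dots> = (b*r)/b" using e1 by simp
    also have "\<dots> = r" using b by simp
    finally have 3: "r = y*cc" by simp
    have "y*(a-d) = (q*(a-d))/b" by (simp add: y_def)
    also have "\<dots> = (b*(p-s))/b" using e2 by simp
    also have "\<dots> = p - s" using b by simp
    finally have 4: "s = (p - y*a) + y*d" by (simp add: algebra_simps)
    have "M = lin (p - y*a) y A" unfolding M A by (rule lin_eqI) (use 2 3 4 in simp_all)
    then show ?thesis by (auto simp: inspan_def)
  next
    assume b: "cc \<noteq> 0"
    define y where "y = r/cc"
    have 3: "r = y*cc" using b by (simp add: y_def)
    have "y*b = (b*r)/cc" by (simp add: y_def)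
    also have "\<dots> = (cc*q)/cc" using e1 by simp
    also have "\<dots> = q" using b by simp
    finally have 2: "q = y*b" by simp
    have "y*(a-d) = (r*(a-d))/cc" by (simp add: y_def)
    also have "\<dots> = (cc*(p-s))/cc" using e3 by simp
    also have "\<dots> = p - s" using b by simp
    finally have 4: "s = (p - y*a) + y*d" by (simp add: algebra_simps)
    have "M = lin (p - y*a) y A" unfolding M A by (rule lin_eqI) (use 2 3 4 in simp_all)
    then show ?thesis by (auto simp: inspan_def)
  next
    assume b: "a \<noteq> d"
    then have b': "a - d \<noteq> 0" by simp
    define y where "y = (p-s)/(a-d)"
    have 4: "s = (p - y*a) + y*d"
    proof -
      have "y*(a-d) = p - s" using b' by (simp add: y_def)
      then show ?thesis by (simp add: algebra_simps)
    qed
    have "y*b = (b*(p-s))/(a-d)" by (simp add: y_def)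
    also have "\<dots> = (q*(a-d))/(a-d)" using e2 by simp
    also have "\<dots> = q" using b' by simp
    finally have 2: "q = y*b" by simp
    have "y*cc = (cc*(p-s))/(a-d)" by (simp add: y_def)
    also have "\<dots> = (r*(a-d))/(a-d)" using e3 by simp
    also have "\<dots> = r" using b' by simp
    finally have 3: "r = y*cc" by simp
    have "M = lin (p - y*a) y A" unfolding M A by (rule lin_eqI) (use 2 3 4 in simp_all)
    then show ?thesis by (auto simp: inspan_def)
  qed
qed

lemma nonscalar_sl2:
  assumes "mdet (A::'a::field mat2) = 1" "A \<noteq> mid" "A \<noteq> mneg mid"
  shows "nonscalar A"
proof (unfold nonscalar_def, rule allI, rule notI)
  fix k assume A: "A = smat k"
  then have "k*k = 1" using assms by (simp add: mdefs)
  then have "k = 1 \<or> k = -1" by (metis mult_cancel_left1 square_eq_1_iff)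
  then show False using assms A by (auto simp: mdefs)
qed

lemma tr0_sq0: "mdet (a,b,c,d) = 1 \<Longrightarrow> mtr (a,b,c,d) = 0 \<Longrightarrow> mmul (a,b,c,d) (a,b,c,d) = mneg mid"
  apply (simp add: mdefs) by (intro conjI; algebra)
lemma tr0_sq: "mdet A = 1 \<Longrightarrow> mtr A = 0 \<Longrightarrow> mmul A A = mneg mid"
  using tr0_sq0 by (cases A) blast

lemma conj_tr0: "mdet (e,f,g,h) = 1 \<Longrightarrow> mtr (mmul (minv (e,f,g,h)) (mmul (a,b,c,d) (e,f,g,h))) = mtr (a,b,c,d)"
  apply (simp add: mdefs) by algebra
lemma conj_tr: "mdet Y = 1 \<Longrightarrow> mtr (mmul (minv Y) (mmul X Y)) = mtr X"
  using conj_tr0 by (cases X; cases Y) blast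

lemma anticomm_tr:
  assumes "mdet Y = 1" "mmul X Y = mneg (mmul Y X)"
  shows "mtr (X::'a::field_char_0 mat2) = 0"
proof -
  have "mmul (minv Y) (mmul X Y) = mneg X"
    using assms by (simp add: mmul_mneg flip: mmul_assoc add: minv_left)
  then have "mtr X = - mtr X" using conj_tr[OF assms(1), of X]
    by (cases X) (simp add: mdefs)
  then show ?thesis by simp
qed

lemma mdet_lin: "mdet (lin x y A) = x*x + x*y*mtr A + y*y*mdet A"
  by (cases A) (simp add: mdefs algebra_simps)
lemma mtr_lin: "mtr (lin x y A) = 2*x + y*mtr A"
  by (cases A) (simp add: mdefs algebra_simps)
lemma mtr_mneg: "mtr (mneg A) = - mtr A"
  by (cases A) (simp add: mdefs)

lemma nonscalar_iff: "nonscalar (a,b,c,d) \<longleftrightarrow> b \<noteq> 0 \<or> c \<noteq> 0 \<or> a \<noteq> d"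
  by (auto simp: nonscalar_def smat_def)
lemma lin_scalar: "lin x y A = smat k \<Longrightarrow> y \<noteq> 0 \<Longrightarrow> \<not> nonscalar A"
proof -
  assume h: "lin x y A = smat k" "y \<noteq> 0"
  obtain a b c d where A: "A = (a,b,c,d)" by (cases A) auto
  have "x + y*a = k" "y*b = 0" "y*c = 0" "x + y*d = k" using h by (simp_all add: A mdefs)
  then have "b = 0" "c = 0" "a = d" using h(2) by (simp_all, metis add_left_cancel mult_cancel_left)
  then show ?thesis by (simp add: A nonscalar_iff)
qed


lemma mmul_lin0: "mdet (a,b,c,d) = 1 \<Longrightarrow> mmul (a,b,c,d) (lin x y (a,b,c,d)) = lin (-y) (x + y * mtr (a,b,c,d)) (a,b,c,d)"
  apply (simp add: mdefs) by (intro conjI; ((simp add: algebra_simps; fail) | algebra))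
lemma mmul_lin: "mdet A = 1 \<Longrightarrow> mmul A (lin x y A) = lin (-y) (x + y * mtr A) A"
  using mmul_lin0 by (cases A) blast

lemma mpow_unip:
  assumes d: "mdet A = 1" and e: "mtr A = 2*e" and e2: "e*e = 1"
  shows "mpow A n = lin ((1 - of_nat n) * e^n) (of_nat n * e^(n+1)) A"
proof (induction n)
  case 0
  then show ?case by (cases A) (simp add: mdefs)
next
  case (Suc n)
  have p1: "e^(n+2) = e^n" using e2 by (simp add: power_add power2_eq_square)
  have "mpow A (Suc n) = lin (- (of_nat n * e^(n+1))) ((1 - of_nat n) * e^n + of_nat n * e^(n+1) * mtr A) A"
    using Suc by (simp add: mmul_lin d)
  also have "... = lin ((1 - of_nat (Suc n)) * e^(Suc n)) (of_nat (Suc n) * e^(Suc n+1)) A"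
  proof -
    have "(1 - of_nat n) * e^n + of_nat n * e^(n+1) * mtr A = (1 + of_nat n) * e^n"
      using e e2 by (simp add: algebra_simps power_add)
    moreover have "(1 + of_nat n) * e^n = of_nat (Suc n) * e^(Suc n+1)"
      using p1 e2 by (simp add: algebra_simps) (metis (no_types, lifting) mult.assoc mult_1)
    moreover have "- (of_nat n * e^(n+1)) = (1 - of_nat (Suc n)) * e^(Suc n)"
      by (simp add: algebra_simps)
    ultimately show ?thesis by metis
  qed
  finally show ?case .
qed

lemma finord_tr:
  assumes d: "mdet A = (1::'a::field_char_0)" and n: "n \<ge> 1" and p: "mpow A n = mid \<or> mpow A n = mneg mid"
    and t: "mtr A * mtr A = 4"
  shows "\<not> nonscalar A"
proof -
  define e where "e = mtr A / 2"
  have e: "mtr A = 2*e" by (simp add: e_def)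
  have e2: "e*e = 1" using t by (simp add: e_def field_simps)
  have "e \<noteq> 0" using e2 by auto
  then have y: "of_nat n * e^(n+1) \<noteq> 0" using n by simp
  have pw: "mpow A n = lin ((1 - of_nat n) * e^n) (of_nat n * e^(n+1)) A"
    by (rule mpow_unip[OF d e e2])
  from p have "\<exists>k. mpow A n = smat k" by (auto simp: mdefs)
  then show ?thesis using lin_scalar y pw by metis
qed

lemma minv_minv[simp]: "minv (minv A) = A"
  by (cases A) (simp add: mdefs)

lemma tr_swap0:
  assumes "mmul (p,q,r,s) (a,b,c,d) = mmul (lin (a+d) (-1) (a,b,c,d)) (p,q,r,s)"
  shows "(p+s)*b = 0 \<and> (p+s)*c = 0 \<and> (p+s)*(a-d) = 0"
  using assms apply (simp add: mdefs) apply (elim conjE) by (intro conjI; algebra)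

lemma tr_swap:
  assumes "nonscalar X" "mmul H X = mmul (lin (mtr X) (-1) X) H"
  shows "mtr H = 0"
proof -
  obtain a b c d where X: "X = (a,b,c,d)" by (cases X) auto
  obtain p q r s where H: "H = (p,q,r,s)" by (cases H) auto
  have "(p+s)*b = 0 \<and> (p+s)*c = 0 \<and> (p+s)*(a-d) = 0"
    using tr_swap0 assms(2) by (simp add: X H mtr_def)
  moreover have "b \<noteq> 0 \<or> c \<noteq> 0 \<or> a - d \<noteq> 0" using assms(1) by (simp add: X nonscalar_iff)
  ultimately show ?thesis by (auto simp: H mtr_def)
qed

lemma quad0:
  assumes "2*x + y*t = (t::'a::field)" "x*x + x*y*t + y*y = 1"
  shows "(1 - y*y) * (t*t - 4) = 0"
proof -
  have e: "2*x - (t - y*t) = 0" using assms(1) by (simp add: algebra_simps)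
  have "(1 - y*y)*(t*t-4) = 4*(x*x + x*y*t + y*y - 1) - (2*x - (t - y*t))*(2*x + (t - y*t)) - 2*y*t*(2*x - (t - y*t))"
    by (simp add: algebra_simps)
  then show ?thesis using e assms(2) by simp
qed

lemma norm_mat:
  fixes X H :: "'a::field_char_0 mat2"
  assumes ns: "nonscalar X" and dX: "mdet X = 1" and dH: "mdet H = 1" and t4: "mtr X * mtr X \<noteq> 4"
    and c: "mmul (mmul H (mmul X (minv H))) X = mmul X (mmul H (mmul X (minv H)))"
  shows "mmul H X = mmul X H \<or> mtr H = 0"
proof -
  define Y where "Y = mmul H (mmul X (minv H))"
  have "inspan X Y" using centralizer[OF ns] c by (simp add: Y_def)
  then obtain x y where Y: "Y = lin x y X" by (auto simp: inspan_def)
  have trY: "mtr Y = mtr X" using conj_tr[of "minv H" X] dH by (simp add: Y_def)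
  have dY: "mdet Y = 1" using dX dH by (simp add: Y_def mdet_mmul)
  have "2*x + y*mtr X = mtr X" using trY by (simp add: Y mtr_lin)
  moreover have "x*x + x*y*mtr X + y*y = 1" using dY dX by (simp add: Y mdet_lin)
  ultimately have q: "(1 - y*y) * (mtr X * mtr X - 4) = 0" by (rule quad0)
  have HX: "mmul H X = mmul Y H"
    using dH by (simp add: Y_def mmul_assoc minv_left)
  from q t4 have "y*y = 1" by simp
  then have "y = 1 \<or> y = -1" by (metis mult_cancel_left1 square_eq_1_iff)
  then show ?thesis
  proof
    assume y1: "y = 1"
    then have "x = 0" using \<open>2*x + y*mtr X = mtr X\<close> by simp
    then have "Y = X" using y1 Y by (cases X) (simp add: mdefs)
    then show ?thesis using HX by simp
  next
    assume y1: "y = -1"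
    then have "x = mtr X" using \<open>2*x + y*mtr X = mtr X\<close> by simp
    then have "mtr H = 0" using tr_swap[OF ns] HX Y y1 by simp
    then show ?thesis by simp
  qed
qed


context
  fixes v :: "'a::field_char_0 \<Rightarrow> int"
  assumes NLF: "nonarch_local_field v"
begin

lemma vmul: "x \<noteq> 0 \<Longrightarrow> y \<noteq> 0 \<Longrightarrow> v (x*y) = v x + v y"
  using NLF by (simp add: nonarch_local_field_def)
lemma vadd: "x \<noteq> 0 \<Longrightarrow> y \<noteq> 0 \<Longrightarrow> x + y \<noteq> 0 \<Longrightarrow> v (x+y) \<ge> min (v x) (v y)"
  using NLF by (simp add: nonarch_local_field_def)
lemma v1: "v 1 = 0"
  using vmul[of 1 1] by simp
lemma vneg1: "v (-1) = 0"
  using vmul[of "-1" "-1"] v1 by simp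
lemma vneg: "v (-x) = v x"
proof (cases "x = 0")
  case False
  then show ?thesis using vmul[of "-1" x] vneg1 by simp
qed simp
lemma vinv: "x \<noteq> 0 \<Longrightarrow> v (inverse x) = - v x"
  using vmul[of x "inverse x"] v1 by simp
lemma vpow: "x \<noteq> 0 \<Longrightarrow> v (x^n) = int n * v x"
  by (induction n) (simp_all add: v1 vmul algebra_simps)

lemma vsmall_add: "vsmall v n x \<Longrightarrow> vsmall v n y \<Longrightarrow> vsmall v n (x+y)"
  unfolding vsmall_def
proof (elim disjE)
  assume hx: "n \<le> v x" and hy: "n \<le> v y"
  show "x + y = 0 \<or> n \<le> v (x+y)"
  proof (cases "x = 0 \<or> y = 0 \<or> x + y = 0")
    case True then show ?thesis using hx hy by auto
  next
    case False then show ?thesis using vadd[of x y] hx hy by auto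
  qed
qed auto
lemma vsmall_neg: "vsmall v n x \<Longrightarrow> vsmall v n (-x)"
  by (simp add: vsmall_def vneg)
lemma vsmall_diff: "vsmall v n x \<Longrightarrow> vsmall v n y \<Longrightarrow> vsmall v n (x-y)"
  using vsmall_add[of n x "-y"] vsmall_neg by simp
lemma vsmall_mul: "vsmall v n x \<Longrightarrow> vsmall v m y \<Longrightarrow> vsmall v (n+m) (x*y)"
  by (cases "x = 0 \<or> y = 0") (auto simp: vsmall_def vmul)
lemma vsmall_mono: "vsmall v n x \<Longrightarrow> m \<le> n \<Longrightarrow> vsmall v m x"
  by (auto simp: vsmall_def)
lemma vsmall_0[simp]: "vsmall v n 0"
  by (simp add: vsmall_def)
lemma vsmall_1: "n \<le> 0 \<Longrightarrow> vsmall v n 1"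
  by (simp add: vsmall_def v1)
lemma vint_vsmall: "vint v x = vsmall v 0 x"
  by (simp add: vint_def vsmall_def)
lemma vsmall_ex: "\<exists>n. vsmall v n x"
  by (auto simp: vsmall_def)
lemma vsmall_sum: "vsmall v n x \<Longrightarrow> vsmall v n y \<Longrightarrow> vsmall v n z \<Longrightarrow> vsmall v n (x+y+z)"
  by (simp add: vsmall_add)

lemma vint_add: "vint v x \<Longrightarrow> vint v y \<Longrightarrow> vint v (x+y)"
  by (simp add: vint_vsmall vsmall_add)
lemma vint_diff: "vint v x \<Longrightarrow> vint v y \<Longrightarrow> vint v (x-y)"
  by (simp add: vint_vsmall vsmall_diff)
lemma vint_neg: "vint v x \<Longrightarrow> vint v (-x)"
  by (simp add: vint_vsmall vsmall_neg)
lemma vint_mul: "vint v x \<Longrightarrow> vint v y \<Longrightarrow> vint v (x*y)"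
  using vsmall_mul[of 0 x 0 y] by (simp add: vint_vsmall)
lemma vint_0[simp]: "vint v 0" and vint_1[simp]: "vint v 1"
  by (simp_all add: vint_def v1)

lemma vint_sq: "vint v (x*x) \<Longrightarrow> vint v x"
  by (cases "x = 0") (auto simp: vint_def vmul)

lemma vint_quad:
  assumes y: "vint v y" and t: "vint v t" and q: "x*x + x*y*t + y*y = 1"
  shows "vint v x"
proof (rule ccontr)
  assume nx: "\<not> vint v x"
  then have x0: "x \<noteq> 0" and n: "v x < 0" by (auto simp: vint_def)
  let ?n = "v x"
  have "vsmall v ?n x" by (simp add: vsmall_def)
  then have a: "vsmall v ?n (x*(y*t))" using vsmall_mul[of ?n x 0 "y*t"] vint_mul[OF y t]
    by (simp add: vint_vsmall)
  have b: "vsmall v ?n (y*y)" using vint_mul[OF y y] vsmall_mono n by (simp add: vint_vsmall)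
  have c: "vsmall v ?n 1" using n by (simp add: vsmall_1)
  have "x*x = 1 - x*(y*t) - y*y" using q by (simp add: algebra_simps)
  then have "vsmall v ?n (x*x)" using a b c by (simp add: vsmall_diff)
  then show False using x0 n by (simp add: vsmall_def vmul)
qed

lemma reps:
  "\<exists>S. finite S \<and> (\<forall>x. vsmall v 0 x \<longrightarrow> (\<exists>s\<in>S. vsmall v (int N) (x - s)))"
proof (induction N)
  case 0
  show ?case by (rule exI[of _ "{0}"]) simp
next
  case (Suc N)
  then obtain S where S: "finite S" "\<forall>x. vsmall v 0 x \<longrightarrow> (\<exists>s\<in>S. vsmall v (int N) (x - s))" by blast
  obtain S1 where S1: "finite S1" "\<forall>x. vint v x \<longrightarrow> (\<exists>s\<in>S1. vsmall v 1 (x - s))"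
    using NLF by (auto simp: nonarch_local_field_def)
  obtain p where p: "p \<noteq> 0" "v p = 1" using NLF by (auto simp: nonarch_local_field_def)
  have pN: "p^N \<noteq> 0" "v (p^N) = int N" using p by (simp_all add: vpow)
  let ?S = "(\<lambda>(s,t). s + p^N * t) ` (S \<times> S1)"
  show ?case
  proof (intro exI conjI allI impI)
    show "finite ?S" using S S1 by simp
    fix x assume x: "vsmall v 0 x"
    obtain s where s: "s \<in> S" "vsmall v (int N) (x - s)" using S x by blast
    define y where "y = (x - s) / p^N"
    have "vint v y"
    proof (cases "x - s = 0")
      case False
      then have "v (x - s) = v y + v (p^N)" using vmul[of y "p^N"] pN by (simp add: y_def)
      then show ?thesis using s(2) False pN by (simp add: vint_def vsmall_def)
    qed (simp add: y_def)
    then obtain t where t: "t \<in> S1" "vsmall v 1 (y - t)" using S1 by blast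
    have "x - (s + p^N * t) = p^N * (y - t)" using pN by (simp add: y_def field_simps)
    moreover have "vsmall v (int N + 1) (p^N * (y - t))"
      using vsmall_mul[of "int N" "p^N" 1 "y - t"] t pN by (simp add: vsmall_def)
    ultimately have "vsmall v (int (Suc N)) (x - (s + p^N * t))" by (simp add: add.commute)
    moreover have "s + p^N * t \<in> ?S" using s t by force
    ultimately show "\<exists>s\<in>?S. vsmall v (int (Suc N)) (x - s)" by blast
  qed
qed

end

definition O2 :: "('a::field \<Rightarrow> int) \<Rightarrow> ('a \<times> 'a) set" where
  "O2 v = {p. vint v (fst p) \<and> vint v (snd p)}"
definition emat :: "'a::field \<times> 'a \<Rightarrow> 'a \<times> 'a \<Rightarrow> 'a mat2" where
  "emat e1 e2 = (fst e1, fst e2, snd e1, snd e2)"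
definition einv :: "'a::field mat2 \<Rightarrow> 'a mat2" where
  "einv = (\<lambda>(a,b,c,d). (d/(a*d-b*c), -b/(a*d-b*c), -c/(a*d-b*c), a/(a*d-b*c)))"
definition coord :: "'a::field mat2 \<Rightarrow> 'a mat2 \<Rightarrow> 'a mat2" where
  "coord A E = mmul (einv E) (mmul A E)"
definition cint :: "('a::field \<Rightarrow> int) \<Rightarrow> 'a mat2 \<Rightarrow> bool" where
  "cint v = (\<lambda>(a,b,c,d). vint v a \<and> vint v b \<and> vint v c \<and> vint v d)"

lemma lattice_eq: "lattice_of v e1 e2 = mat_act (emat e1 e2) ` O2 v"
  unfolding lattice_of_def O2_def emat_def mat_act_def
  by (cases e1; cases e2) (auto simp: algebra_simps image_def)

lemma mat_act_mmul: "mat_act (mmul A B) p = mat_act A (mat_act B p)"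
  by (cases A; cases B; cases p) (simp add: mat_act_def mmul_def algebra_simps)
lemma image_mat_act: "mat_act A ` (mat_act B ` S) = mat_act (mmul A B) ` S"
  by (simp add: image_image mat_act_mmul)
lemma mat_act_mid[simp]: "mat_act mid p = p"
  by (cases p) (simp add: mat_act_def mid_def)
lemma image_mat_act_mid[simp]: "mat_act mid ` S = S"
  by simp

lemma einv_msc: "einv (a,b,c,d) = (let D = a*d - b*c in mmul (smat (1/D)) (minv (a,b,c,d)))"
  by (simp add: einv_def mdefs Let_def)
lemma einv_left: "mdet E \<noteq> 0 \<Longrightarrow> mmul (einv E) E = mid"
proof (cases E)
  case (fields a b c d)
  assume h: "mdet E \<noteq> 0"
  have "mmul (minv E) E = smat (a*d - b*c)" by (simp add: fields mdefs algebra_simps)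
  then show ?thesis using h
    by (simp add: fields einv_msc mmul_assoc Let_def mdefs flip: diff_divide_distrib)
qed
lemma einv_right: "mdet E \<noteq> 0 \<Longrightarrow> mmul E (einv E) = mid"
proof (cases E)
  case (fields a b c d)
  assume h: "mdet E \<noteq> 0"
  have "mmul E (minv E) = smat (a*d - b*c)" by (simp add: fields mdefs algebra_simps)
  moreover have "mmul E (smat k) = mmul (smat k) E" for k by (simp add: fields mdefs)
  ultimately show ?thesis using h
    by (simp add: fields einv_msc Let_def mdefs flip: diff_divide_distrib)
qed
lemma mdet_coord: "mdet E \<noteq> 0 \<Longrightarrow> mdet (coord A E) = mdet A"
proof -
  assume E: "mdet E \<noteq> 0"
  have "mdet (einv E) * mdet E = 1" using einv_left[OF E] by (metis mdet_mmul mdet_mid)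
  then show ?thesis unfolding coord_def mdet_mmul by (simp add: algebra_simps)
qed
lemma mtr_comm: "mtr (mmul P Q) = mtr (mmul Q P)"
  by (cases P; cases Q) (simp add: mdefs algebra_simps)
lemma mtr_coord: "mdet E \<noteq> 0 \<Longrightarrow> mtr (coord A E) = mtr A"
  unfolding coord_def by (metis mtr_comm mmul_assoc einv_right mmul_mid(2))
lemma coord_intertwine: "mdet E \<noteq> 0 \<Longrightarrow> mmul E (coord A E) = mmul A E"
  unfolding coord_def by (metis mmul_assoc einv_right mmul_mid(1))
lemma lin_intertwine0: "mmul (e,f,g,h) (a,b,c,d) = mmul (p,q,r,s) (e,f,g,h) \<Longrightarrow>
   mmul (e,f,g,h) (lin x y (a,b,c,d)) = mmul (lin x y (p,q,r,s)) (e,f,g,h)"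
  apply (simp add: mdefs) apply (elim conjE) by (intro conjI; ((simp add: algebra_simps; fail) | algebra))
lemma lin_intertwine: "mmul E M = mmul A E \<Longrightarrow> mmul E (lin x y M) = mmul (lin x y A) E"
  using lin_intertwine0 by (cases E; cases M; cases A) blast
lemma coord_lin: "mdet E \<noteq> 0 \<Longrightarrow> coord (lin x y A) E = lin x y (coord A E)"
proof -
  assume E: "mdet E \<noteq> 0"
  have "mmul E (lin x y (coord A E)) = mmul (lin x y A) E"
    by (rule lin_intertwine[OF coord_intertwine[OF E]])
  then have "mmul (einv E) (mmul E (lin x y (coord A E))) = coord (lin x y A) E"
    by (simp add: coord_def)
  then show ?thesis by (simp add: einv_left[OF E] flip: mmul_assoc)
qed
lemma mneg_lin: "mneg A = lin 0 (-1) A"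
  by (cases A) (simp add: mdefs)

context
  fixes v :: "'a::field_char_0 \<Rightarrow> int"
  assumes NLF: "nonarch_local_field v"
begin

lemma vint01[simp]: "vint v 0" "vint v 1" using vint_0[OF NLF] vint_1[OF NLF] by auto

lemma cint_lin: "cint v M \<Longrightarrow> vint v x \<Longrightarrow> vint v y \<Longrightarrow> cint v (lin x y M)"
  by (cases M) (simp add: cint_def lin_def vint_add[OF NLF] vint_mul[OF NLF])
lemma cint_mneg: "cint v M \<Longrightarrow> cint v (mneg M)"
  by (cases M) (simp add: cint_def mneg_def vint_neg[OF NLF])
lemma cint_tr: "cint v M \<Longrightarrow> vint v (mtr M)"
  by (cases M) (simp add: cint_def mtr_def vint_add[OF NLF])

lemma K2:
  assumes d: "mdet M = 1"
  shows "mat_act M ` O2 v = O2 v \<longleftrightarrow> cint v M"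
proof
  assume h: "mat_act M ` O2 v = O2 v"
  obtain a b c e where M: "M = (a,b,c,e)" by (cases M) auto
  have o: "(1,0) \<in> O2 v" "(0,1) \<in> O2 v" by (auto simp: O2_def)
  have "mat_act M (1,0) \<in> O2 v" "mat_act M (0,1) \<in> O2 v"
    using imageI[OF o(1), of "mat_act M"] imageI[OF o(2), of "mat_act M"] h by auto
  then show "cint v M" by (simp add: M mat_act_def O2_def cint_def)
next
  assume c: "cint v M"
  obtain a b cc e where M: "M = (a,b,cc,e)" by (cases M) auto
  have sub: "mat_act N ` O2 v \<subseteq> O2 v" if "cint v N" for N
  proof -
    obtain a b cc e where N: "N = (a,b,cc,e)" by (cases N) auto
    show ?thesis using that
      by (auto simp: N mat_act_def O2_def cint_def vint_add[OF NLF] vint_mul[OF NLF])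
  qed
  have ci: "cint v (minv M)" using c by (simp add: M minv_def cint_def vint_neg[OF NLF])
  show "mat_act M ` O2 v = O2 v"
  proof
    show "mat_act M ` O2 v \<subseteq> O2 v" by (rule sub[OF c])
    show "O2 v \<subseteq> mat_act M ` O2 v"
    proof
      fix p assume p: "p \<in> O2 v"
      have "p = mat_act M (mat_act (minv M) p)"
        by (simp flip: mat_act_mmul add: minv_right[OF d])
      moreover have "mat_act (minv M) p \<in> O2 v" using sub[OF ci] p by auto
      ultimately show "p \<in> mat_act M ` O2 v" by blast
    qed
  qed
qed

lemma smat_div: "(x,y) = mat_act (smat c) p \<Longrightarrow> p \<in> O2 v \<Longrightarrow> c \<noteq> 0 \<Longrightarrow> vint v (x/c) \<and> vint v (y/c)"
  by (cases p) (simp add: mat_act_def smat_def O2_def)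
lemma act_back: "p = mat_act M r \<Longrightarrow> mdet M = 1 \<Longrightarrow> r = mat_act (minv M) p"
  by (simp flip: mat_act_mmul add: minv_left)

lemma K1:
  assumes d: "mdet M = 1" and c0: "c \<noteq> 0" and h: "mat_act M ` O2 v = mat_act (smat c) ` O2 v"
  shows "cint v M"
proof -
  obtain a b cc e where M: "M = (a,b,cc,e)" by (cases M) auto
  have o: "(1,0) \<in> O2 v" "(0,1) \<in> O2 v" by (auto simp: O2_def)
  have m1: "mat_act M (1,0) = (a, cc)" and m2: "mat_act M (0,1) = (b, e)" by (simp_all add: M mat_act_def)
  have "(a,cc) \<in> mat_act (smat c) ` O2 v" using h imageI[OF o(1), of "mat_act M"] m1 by simp
  then obtain p where p: "p \<in> O2 v" "(a,cc) = mat_act (smat c) p" by blast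
  have "(b,e) \<in> mat_act (smat c) ` O2 v" using h imageI[OF o(2), of "mat_act M"] m2 by simp
  then obtain q where q: "q \<in> O2 v" "(b,e) = mat_act (smat c) q" by blast
  have q1: "vint v (a/c)" "vint v (cc/c)" "vint v (b/c)" "vint v (e/c)"
    using smat_div[OF p(2) p(1) c0] smat_div[OF q(2) q(1) c0] by simp_all
  have s1: "mat_act (smat c) (1,0) = (c, 0)" and s2: "mat_act (smat c) (0,1) = (0, c)"
    by (simp_all add: smat_def mat_act_def)
  have "(c,0) \<in> mat_act M ` O2 v" using h imageI[OF o(1), of "mat_act (smat c)"] s1 by simp
  then obtain r1 where r1: "r1 \<in> O2 v" "(c,0) = mat_act M r1" by blast
  have "(0,c) \<in> mat_act M ` O2 v" using h imageI[OF o(2), of "mat_act (smat c)"] s2 by simp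
  then obtain r2 where r2: "r2 \<in> O2 v" "(0,c) = mat_act M r2" by blast
  have "r1 = (e*c, -(cc*c))" using act_back[OF r1(2) d] by (simp add: M minv_def mat_act_def)
  then have q2: "vint v (e*c)" "vint v (-(cc*c))" using r1(1) by (simp_all add: O2_def)
  have "r2 = (-(b*c), a*c)" using act_back[OF r2(2) d] by (simp add: M minv_def mat_act_def)
  then have q2': "vint v (-(b*c))" "vint v (a*c)" using r2(1) by (simp_all add: O2_def)
  have sq: "x*x = (x/c)*(x*c)" for x using c0 by simp
  have q3: "vint v (cc*c)" "vint v (b*c)"
    using vint_neg[OF NLF q2(2)] vint_neg[OF NLF q2'(1)] by simp_all
  have "vint v (a*a)" using vint_mul[OF NLF q1(1) q2'(2)] sq[of a] by simp
  moreover have "vint v (b*b)" using vint_mul[OF NLF q1(3) q3(2)] sq[of b] by simp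
  moreover have "vint v (cc*cc)" using vint_mul[OF NLF q1(2) q3(1)] sq[of cc] by simp
  moreover have "vint v (e*e)" using vint_mul[OF NLF q1(4) q2(1)] sq[of e] by simp
  ultimately have "vint v a" "vint v b" "vint v cc" "vint v e" using vint_sq[OF NLF] by blast+
  then show ?thesis by (simp add: M cint_def)
qed

lemma smat_comm: "mmul (smat c) A = mmul A (smat c)"
  by (cases A) (simp add: mdefs)

lemma VL:
  assumes d: "mdet A = 1" and E: "mdet (emat e1 e2) \<noteq> 0"
  shows "vert_act A (hclass (lattice_of v e1 e2)) = hclass (lattice_of v e1 e2)
         \<longleftrightarrow> cint v (coord A (emat e1 e2))"
proof -
  let ?E = "emat e1 e2"
  let ?M = "coord A ?E"
  let ?L = "lattice_of v e1 e2"
  have L: "?L = mat_act ?E ` O2 v" by (rule lattice_eq)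
  have dM: "mdet ?M = 1" using d E by (simp add: mdet_coord)
  have hc: "hclass L = (\<lambda>c. mat_act (smat c) ` L) ` {c. c \<noteq> 0}" for L :: "('a \<times> 'a) set"
    unfolding hclass_def by (auto simp: mat_act_def smat_def image_def split_beta')
  have AE: "mmul A ?E = mmul ?E ?M" using coord_intertwine[OF E] by simp
  show ?thesis
  proof
    assume h: "vert_act A (hclass ?L) = hclass ?L"
    have "?L = mat_act (smat 1) ` ?L" by (simp add: smat_def flip: mid_def)
    then have "?L \<in> hclass ?L" by (auto simp: hc)
    then have "mat_act A ` ?L \<in> hclass ?L" using h unfolding vert_act_def by (metis imageI)
    then obtain c where c: "c \<noteq> 0" "mat_act A ` ?L = mat_act (smat c) ` ?L" by (auto simp: hc)
    have "mat_act (einv ?E) ` (mat_act A ` ?L) = mat_act ?M ` O2 v"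
      by (simp add: L image_mat_act coord_def mmul_assoc)
    moreover have "mat_act (einv ?E) ` (mat_act (smat c) ` ?L) = mat_act (smat c) ` O2 v"
      by (simp add: L image_mat_act smat_comm einv_left[OF E] flip: mmul_assoc)
    ultimately have "mat_act ?M ` O2 v = mat_act (smat c) ` O2 v" using c by simp
    then show "cint v ?M" by (rule K1[OF dM c(1)])
  next
    assume ci: "cint v ?M"
    have "mat_act ?M ` O2 v = O2 v" using K2[OF dM] ci by simp
    then have AL: "mat_act A ` ?L = ?L"
      by (metis L AE image_mat_act)
    have "mat_act A ` (mat_act (smat c) ` ?L) = mat_act (smat c) ` ?L" for c
      by (metis AL image_mat_act smat_comm)
    then show "vert_act A (hclass ?L) = hclass ?L"
      unfolding vert_act_def hc image_image by simp
  qed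
qed

end

lemma BT_E:
  assumes "X \<in> BT_vertices v"
  obtains e1 e2 where "mdet (emat e1 e2) \<noteq> 0" "X = hclass (lattice_of v e1 e2)"
proof -
  from assms obtain e1 e2 where "fst e1 * snd e2 - snd e1 * fst e2 \<noteq> 0" "X = hclass (lattice_of v e1 e2)"
    unfolding BT_vertices_def is_lattice_def by blast
  then show ?thesis using that by (simp add: emat_def mdet_def mult.commute)
qed

context
  fixes v :: "'a::field_char_0 \<Rightarrow> int"
  assumes NLF: "nonarch_local_field v"
begin

lemma Fix_iff:
  assumes d: "mdet A = 1"
  shows "X \<in> Fix v (pcls A) \<longleftrightarrow> X \<in> BT_vertices v \<and>
    (\<forall>e1 e2. mdet (emat e1 e2) \<noteq> 0 \<longrightarrow> X = hclass (lattice_of v e1 e2) \<longrightarrow> cint v (coord A (emat e1 e2)))"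
proof
  assume X: "X \<in> Fix v (pcls A)"
  then have "X \<in> BT_vertices v" and va: "vert_act A X = X" by (auto simp: Fix_def pcls_def)
  moreover have "cint v (coord A (emat e1 e2))" if "mdet (emat e1 e2) \<noteq> 0" "X = hclass (lattice_of v e1 e2)" for e1 e2
    using VL[OF NLF d that(1)] va that(2) by simp
  ultimately show "X \<in> BT_vertices v \<and> (\<forall>e1 e2. mdet (emat e1 e2) \<noteq> 0 \<longrightarrow> X = hclass (lattice_of v e1 e2) \<longrightarrow> cint v (coord A (emat e1 e2)))"
    by blast
next
  assume h: "X \<in> BT_vertices v \<and> (\<forall>e1 e2. mdet (emat e1 e2) \<noteq> 0 \<longrightarrow> X = hclass (lattice_of v e1 e2) \<longrightarrow> cint v (coord A (emat e1 e2)))"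
  then obtain e1 e2 where E: "mdet (emat e1 e2) \<noteq> 0" "X = hclass (lattice_of v e1 e2)"
    using BT_E by blast
  have c: "cint v (coord A (emat e1 e2))" using h E by blast
  have c': "cint v (coord (mneg A) (emat e1 e2))"
    using cint_mneg[OF NLF c] coord_lin[OF E(1), of 0 "-1" A] by (simp add: mneg_lin)
  have "vert_act A X = X" using VL[OF NLF d E(1)] c E(2) by simp
  moreover have "vert_act (mneg A) X = X" using VL[OF NLF _ E(1), of "mneg A"] d c' E(2) by simp
  ultimately show "X \<in> Fix v (pcls A)" using h by (auto simp: Fix_def pcls_def)
qed

lemma nest:
  assumes dA: "mdet A = 1" and dB: "mdet B = 1" and B: "B = lin x y A" and y: "vint v y"
    and ne: "Fix v (pcls A) \<noteq> {}"
  shows "Fix v (pcls A) \<subseteq> Fix v (pcls B)"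
proof -
  obtain X0 where X0: "X0 \<in> Fix v (pcls A)" using ne by blast
  then have "X0 \<in> BT_vertices v" by (simp add: Fix_iff[OF dA])
  then obtain e1 e2 where E: "mdet (emat e1 e2) \<noteq> 0" "X0 = hclass (lattice_of v e1 e2)"
    using BT_E by blast
  have "cint v (coord A (emat e1 e2))" using X0 E Fix_iff[OF dA] by blast
  then have t: "vint v (mtr A)" using cint_tr[OF NLF] mtr_coord[OF E(1)] by metis
  have "x*x + x*y*mtr A + y*y = 1" using dB dA by (simp add: B mdet_lin)
  then have x: "vint v x" using vint_quad[OF NLF y t] by blast
  show ?thesis
  proof
    fix X assume X: "X \<in> Fix v (pcls A)"
    show "X \<in> Fix v (pcls B)"
      unfolding Fix_iff[OF dB]
    proof (intro conjI allI impI)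
      show "X \<in> BT_vertices v" using X Fix_iff[OF dA] by blast
      fix e1 e2 assume "mdet (emat e1 e2) \<noteq> 0" "X = hclass (lattice_of v e1 e2)"
      then have "cint v (coord A (emat e1 e2))" and "coord B (emat e1 e2) = lin x y (coord A (emat e1 e2))"
        using X Fix_iff[OF dA] coord_lin B by blast+
      then show "cint v (coord B (emat e1 e2))" using cint_lin[OF NLF] x y by simp
    qed
  qed
qed

lemma nest2:
  assumes dA: "mdet A = 1" and dB: "mdet B = 1" and s: "inspan A B"
    and neA: "Fix v (pcls A) \<noteq> {}" and neB: "Fix v (pcls B) \<noteq> {}"
  shows "Fix v (pcls A) \<subseteq> Fix v (pcls B) \<or> Fix v (pcls B) \<subseteq> Fix v (pcls A)"
proof -
  obtain x y where B: "B = lin x y A" using s by (auto simp: inspan_def)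
  show ?thesis
  proof (cases "vint v y")
    case True
    then show ?thesis using nest[OF dA dB B True neA] by blast
  next
    case False
    then have y0: "y \<noteq> 0" and yn: "v y < 0" by (auto simp: vint_def)
    have A: "A = lin (-x/y) (1/y) B"
      using y0 by (cases A) (simp add: B mdefs field_simps)
    have "vint v (1/y)" using vinv[OF NLF y0] yn by (simp add: vint_def divide_inverse)
    then show ?thesis using nest[OF dB dA A _ neB] by blast
  qed
qed

end

lemma arith_aux: "(g - 1) * m = g * (m - 1) \<Longrightarrow> g \<ge> 1 \<Longrightarrow> m \<ge> 1 \<Longrightarrow> m = (g::nat)"
  by (cases g; cases m) (auto simp: algebra_simps)

context group
begin

lemma inv_cancel_l[simp]: "h \<in> carrier G \<Longrightarrow> a \<in> carrier G \<Longrightarrow> inv h \<otimes> (h \<otimes> a) = a"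
  by (simp flip: m_assoc)
lemma inv_cancel_l2[simp]: "h \<in> carrier G \<Longrightarrow> a \<in> carrier G \<Longrightarrow> h \<otimes> (inv h \<otimes> a) = a"
  by (simp flip: m_assoc)

definition conjg :: "'a \<Rightarrow> 'a \<Rightarrow> 'a" where
  "conjg h a = h \<otimes> a \<otimes> inv h"

lemma conjg_closed[simp]: "h \<in> carrier G \<Longrightarrow> a \<in> carrier G \<Longrightarrow> conjg h a \<in> carrier G"
  by (simp add: conjg_def)

lemma conjg_mult: "h \<in> carrier G \<Longrightarrow> a \<in> carrier G \<Longrightarrow> b \<in> carrier G \<Longrightarrow>
  conjg h a \<otimes> conjg h b = conjg h (a \<otimes> b)"
  by (simp add: conjg_def m_assoc)

lemma conjg_comm: "h \<in> carrier G \<Longrightarrow> a \<in> carrier G \<Longrightarrow> b \<in> carrier G \<Longrightarrow>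
  (conjg h a \<otimes> conjg h b = conjg h b \<otimes> conjg h a) \<longleftrightarrow> a \<otimes> b = b \<otimes> a"
proof -
  assume h: "h \<in> carrier G" and a: "a \<in> carrier G" and b: "b \<in> carrier G"
  have "conjg h a \<otimes> conjg h b = conjg h b \<otimes> conjg h a \<longleftrightarrow> conjg h (a \<otimes> b) = conjg h (b \<otimes> a)"
    by (simp add: conjg_mult h a b)
  also have "\<dots> \<longleftrightarrow> a \<otimes> b = b \<otimes> a"
    by (simp add: conjg_def h a b)
  finally show ?thesis .
qed

lemma conjg_inv: "h \<in> carrier G \<Longrightarrow> a \<in> carrier G \<Longrightarrow> conjg (inv h) (conjg h a) = a"
  by (simp add: conjg_def m_assoc)
lemma conjg_mult2: "h \<in> carrier G \<Longrightarrow> k \<in> carrier G \<Longrightarrow> a \<in> carrier G \<Longrightarrow> conjg h (conjg k a) = conjg (h \<otimes> k) a"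
  by (simp add: conjg_def m_assoc inv_mult_group)
lemma conjg_one[simp]: "h \<in> carrier G \<Longrightarrow> conjg h \<one> = \<one>"
  by (simp add: conjg_def)
lemma conjg_eq_one: "h \<in> carrier G \<Longrightarrow> a \<in> carrier G \<Longrightarrow> conjg h a = \<one> \<longleftrightarrow> a = \<one>"
  by (metis conjg_inv conjg_one inv_closed)


lemma fin_pow_one:
  assumes fin: "finite (carrier G)" and x: "x \<in> carrier G"
  shows "\<exists>n::nat. n \<ge> 1 \<and> x [^] n = \<one>"
proof -
  let ?f = "\<lambda>n::nat. x [^] n"
  have sub: "?f ` {..card (carrier G)} \<subseteq> carrier G" using x by auto
  have "\<not> inj_on ?f {..card (carrier G)}"
  proof
    assume "inj_on ?f {..card (carrier G)}"
    then have "card (?f ` {..card (carrier G)}) = Suc (card (carrier G))" by (simp add: card_image)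
    moreover have "card (?f ` {..card (carrier G)}) \<le> card (carrier G)" using card_mono[OF fin sub] .
    ultimately show False by simp
  qed
  then obtain i j :: nat where ij: "i \<noteq> j" "x [^] i = x [^] j" unfolding inj_on_def by blast
  have "\<exists>i j. i < j \<and> x [^] i = x [^] (j::nat)"
  proof (cases "i < j")
    case True then show ?thesis using ij by blast
  next
    case False then have "j < i" using ij by simp
    then show ?thesis using ij by metis
  qed
  then obtain i j :: nat where ij: "i < j" "x [^] i = x [^] j" by blast
  have "x [^] i \<otimes> x [^] (j - i) = x [^] (i + (j - i))" using x by (simp add: nat_pow_mult)
  also have "\<dots> = x [^] j" using ij(1) by simp
  also have "\<dots> = x [^] i \<otimes> \<one>" using ij(2) x by simp
  finally have "x [^] i \<otimes> \<one> = x [^] i \<otimes> x [^] (j - i)" by simp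
  then have "x [^] (j - i) = \<one>" using x by (metis Units_l_cancel Units_eq nat_pow_closed one_closed)
  then show ?thesis using ij(1) by (intro exI[of _ "j - i"]) simp
qed

definition Cz :: "'a \<Rightarrow> 'a set" where
  "Cz x = {y \<in> carrier G. y \<otimes> x = x \<otimes> y}"
definition Uz :: "'a \<Rightarrow> 'a set" where
  "Uz x = {u \<in> carrier G. u \<noteq> \<one> \<and> (\<exists>k\<in>carrier G. conjg (inv k) u \<in> Cz x)}"

lemma comm_inv:
  assumes h: "a \<in> carrier G" "x \<in> carrier G" "a \<otimes> x = x \<otimes> a"
  shows "inv a \<otimes> x = x \<otimes> inv a"
proof -
  have "inv a \<otimes> x = inv a \<otimes> (x \<otimes> a) \<otimes> inv a" using h(1,2) by (simp add: m_assoc)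
  also have "\<dots> = inv a \<otimes> (a \<otimes> x) \<otimes> inv a" using h by simp
  also have "\<dots> = x \<otimes> inv a" using h(1,2) by (simp add: m_assoc)
  finally show ?thesis .
qed
lemma comm_mult: "a \<in> carrier G \<Longrightarrow> b \<in> carrier G \<Longrightarrow> x \<in> carrier G \<Longrightarrow> a \<otimes> x = x \<otimes> a \<Longrightarrow> b \<otimes> x = x \<otimes> b \<Longrightarrow> (a \<otimes> b) \<otimes> x = x \<otimes> (a \<otimes> b)"
  by (metis m_assoc)
lemma Cz_conj: "x \<in> carrier G \<Longrightarrow> w \<in> Cz x \<Longrightarrow> y \<in> Cz x \<Longrightarrow> conjg (inv w) y \<in> Cz x"
proof -
  assume h: "x \<in> carrier G" "w \<in> Cz x" "y \<in> Cz x"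
  then have w: "w \<in> carrier G" "w \<otimes> x = x \<otimes> w" and y: "y \<in> carrier G" "y \<otimes> x = x \<otimes> y"
    by (auto simp: Cz_def)
  have iw: "inv w \<otimes> x = x \<otimes> inv w" using comm_inv[OF w(1) h(1) w(2)] .
  have "(inv w \<otimes> y) \<otimes> x = x \<otimes> (inv w \<otimes> y)" using comm_mult[of "inv w" y x] iw y w h by simp
  then have "(inv w \<otimes> y \<otimes> w) \<otimes> x = x \<otimes> (inv w \<otimes> y \<otimes> w)" using comm_mult[of "inv w \<otimes> y" w x] w y h by simp
  then show ?thesis using w y by (simp add: Cz_def conjg_def)
qed

context
  assumes fin: "finite (carrier G)"
  and trans: "\<And>x y z. x \<in> carrier G \<Longrightarrow> y \<in> carrier G \<Longrightarrow> z \<in> carrier G \<Longrightarrow> y \<noteq> \<one> \<Longrightarrow>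
                 x \<otimes> y = y \<otimes> x \<Longrightarrow> y \<otimes> z = z \<otimes> y \<Longrightarrow> x \<otimes> z = z \<otimes> x"
  and norm: "\<And>x h. x \<in> carrier G \<Longrightarrow> x \<noteq> \<one> \<Longrightarrow> h \<in> carrier G \<Longrightarrow>
                 conjg h x \<otimes> x = x \<otimes> conjg h x \<Longrightarrow> h \<otimes> x = x \<otimes> h"
begin

lemma Tu:
  assumes x: "x \<in> carrier G" "x \<noteq> \<one>" and u: "u \<in> carrier G" "u \<noteq> \<one>"
    and h: "h \<in> carrier G" "conjg (inv h) u \<in> Cz x"
  shows "{k \<in> carrier G. conjg (inv k) u \<in> Cz x} = (\<lambda>w. h \<otimes> w) ` Cz x"
proof
  show "(\<lambda>w. h \<otimes> w) ` Cz x \<subseteq> {k \<in> carrier G. conjg (inv k) u \<in> Cz x}"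
  proof clarify
    fix w assume w: "w \<in> Cz x"
    then have wc: "w \<in> carrier G" by (simp add: Cz_def)
    have "conjg (inv (h \<otimes> w)) u = conjg (inv w) (conjg (inv h) u)"
      using h wc u by (simp add: conjg_mult2 inv_mult_group)
    then show "h \<otimes> w \<in> carrier G \<and> conjg (inv (h \<otimes> w)) u \<in> Cz x"
      using Cz_conj[OF x(1) w h(2)] h wc by simp
  qed
next
  show "{k \<in> carrier G. conjg (inv k) u \<in> Cz x} \<subseteq> (\<lambda>w. h \<otimes> w) ` Cz x"
  proof clarify
    fix k assume k: "k \<in> carrier G" "conjg (inv k) u \<in> Cz x"
    define w where "w = inv h \<otimes> k"
    define y where "y = conjg (inv h) u"
    have wc: "w \<in> carrier G" and yc: "y \<in> carrier G" using h k u by (simp_all add: w_def y_def)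
    have kw: "k = h \<otimes> w" using h k by (simp add: w_def)
    have y1: "y \<noteq> \<one>" using u h by (simp add: y_def conjg_eq_one)
    have "conjg (inv k) u = conjg (inv w) y"
      using h k u by (simp add: w_def y_def conjg_mult2 inv_mult_group m_assoc)
    then have c1: "conjg (inv w) y \<otimes> x = x \<otimes> conjg (inv w) y" using k by (simp add: Cz_def)
    have c2: "y \<otimes> x = x \<otimes> y" using h(2) by (simp add: y_def Cz_def)
    have c3: "conjg (inv w) y \<otimes> y = y \<otimes> conjg (inv w) y"
      using trans[of "conjg (inv w) y" x y] c1 c2 x wc yc by simp
    have "inv w \<otimes> y = y \<otimes> inv w" using norm[OF yc y1, of "inv w"] c3 wc by simp
    then have c4: "w \<otimes> y = y \<otimes> w" using comm_inv[of "inv w" y] wc yc by simp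
    have "w \<otimes> x = x \<otimes> w" using trans[of w y x] c4 c2 wc yc x y1 by simp
    then have "w \<in> Cz x" using wc by (simp add: Cz_def)
    then show "k \<in> (\<lambda>w. h \<otimes> w) ` Cz x" using kw by blast
  qed
qed

lemma count:
  assumes x: "x \<in> carrier G" "x \<noteq> \<one>"
  shows "card (Uz x) * card (Cz x) = card (carrier G) * (card (Cz x) - 1)"
proof -
  define P where "P u k \<longleftrightarrow> u \<noteq> \<one> \<and> conjg (inv k) u \<in> Cz x" for u k
  have CzG: "Cz x \<subseteq> carrier G" by (auto simp: Cz_def)
  have finC: "finite (Cz x)" using fin CzG finite_subset by blast
  have oneC: "\<one> \<in> Cz x" using x by (simp add: Cz_def)
  have A: "card {u \<in> carrier G. P u k} = card (Cz x) - 1" if k: "k \<in> carrier G" for k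
  proof -
    have "{u \<in> carrier G. P u k} = conjg k ` (Cz x - {\<one>})"
    proof
      show "{u \<in> carrier G. P u k} \<subseteq> conjg k ` (Cz x - {\<one>})"
      proof clarify
        fix u assume u: "u \<in> carrier G" "P u k"
        have "u = conjg k (conjg (inv k) u)" using conjg_inv[of "inv k" u] k u by simp
        moreover have "conjg (inv k) u \<in> Cz x - {\<one>}" using u k by (simp add: P_def conjg_eq_one)
        ultimately show "u \<in> conjg k ` (Cz x - {\<one>})" by blast
      qed
      show "conjg k ` (Cz x - {\<one>}) \<subseteq> {u \<in> carrier G. P u k}"
      proof clarify
        fix w assume w: "w \<in> Cz x" "w \<noteq> \<one>"
        then have wc: "w \<in> carrier G" by (simp add: Cz_def)
        have "conjg (inv k) (conjg k w) = w" using conjg_inv k wc by blast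
        then show "conjg k w \<in> carrier G \<and> P (conjg k w) k" using w wc k by (simp add: P_def conjg_eq_one)
      qed
    qed
    moreover have "inj_on (conjg k) (Cz x - {\<one>})"
    proof (rule inj_onI)
      fix a b assume a: "a \<in> Cz x - {\<one>}" and b: "b \<in> Cz x - {\<one>}" and e: "conjg k a = conjg k b"
      have ac: "a \<in> carrier G" and bc: "b \<in> carrier G" using a b by (auto simp: Cz_def)
      have "a = conjg (inv k) (conjg k a)" using conjg_inv[OF k ac] by simp
      also have "\<dots> = conjg (inv k) (conjg k b)" using e by simp
      also have "\<dots> = b" using conjg_inv[OF k bc] by simp
      finally show "a = b" .
    qed
    ultimately show ?thesis using oneC finC by (simp add: card_image card_Diff_singleton)
  qed
  have B: "card {k \<in> carrier G. P u k} = (if u \<in> Uz x then card (Cz x) else 0)" if u: "u \<in> carrier G" for u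
  proof (cases "u \<in> Uz x")
    case True
    then obtain h where h: "h \<in> carrier G" "conjg (inv h) u \<in> Cz x" and u1: "u \<noteq> \<one>" by (auto simp: Uz_def)
    have "{k \<in> carrier G. P u k} = (\<lambda>w. h \<otimes> w) ` Cz x"
      using Tu[OF x u u1 h] u1 by (simp add: P_def)
    moreover have "inj_on (\<lambda>w. h \<otimes> w) (Cz x)" using inj_on_cmult[OF h(1)] CzG inj_on_subset by blast
    ultimately show ?thesis using True card_image by simp
  next
    case False
    then have "{k \<in> carrier G. P u k} = {}" using u by (auto simp: Uz_def P_def)
    then show ?thesis using False by (metis card.empty)
  qed
  have cnt: "card {a \<in> S. Q a} = (\<Sum>a\<in>S. if Q a then 1 else 0)" if "finite S" for S :: "'a set" and Q
    using that by (simp add: sum.inter_filter[symmetric])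
  have "card (carrier G) * (card (Cz x) - 1) = (\<Sum>k\<in>carrier G. card {u \<in> carrier G. P u k})"
    using A by simp
  also have "\<dots> = (\<Sum>k\<in>carrier G. \<Sum>u\<in>carrier G. if P u k then 1 else 0)"
    using cnt fin by simp
  also have "\<dots> = (\<Sum>u\<in>carrier G. \<Sum>k\<in>carrier G. if P u k then 1 else 0)"
    by (rule sum.swap)
  also have "\<dots> = (\<Sum>u\<in>carrier G. card {k \<in> carrier G. P u k})"
    using cnt fin by simp
  also have "\<dots> = (\<Sum>u\<in>carrier G. if u \<in> Uz x then card (Cz x) else 0)"
    using B by simp
  also have "\<dots> = card (Uz x) * card (Cz x)"
  proof -
    have "Uz x \<subseteq> carrier G" by (auto simp: Uz_def)
    then have "{u \<in> carrier G. u \<in> Uz x} = Uz x" by auto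
    then show ?thesis using fin by (simp add: sum.inter_filter[symmetric])
  qed
  finally show ?thesis by simp
qed

lemma disj:
  assumes x: "x \<in> carrier G" and z: "z \<in> carrier G" "z \<noteq> \<one>" "z \<notin> Uz x"
  shows "Uz x \<inter> Uz z = {}"
proof (rule ccontr)
  assume "Uz x \<inter> Uz z \<noteq> {}"
  then obtain u k j where u: "u \<in> carrier G" "u \<noteq> \<one>" and k: "k \<in> carrier G" "conjg (inv k) u \<in> Cz x"
    and j: "j \<in> carrier G" "conjg (inv j) u \<in> Cz z"
    by (auto simp: Uz_def)
  have ck: "u \<otimes> conjg k x = conjg k x \<otimes> u"
  proof -
    have "conjg (inv k) u \<otimes> conjg (inv k) (conjg k x) = conjg (inv k) (conjg k x) \<otimes> conjg (inv k) u"
      using k x conjg_inv[of k x] by (simp add: Cz_def)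
    then show ?thesis using conjg_comm[of "inv k" u "conjg k x"] k u x by simp
  qed
  have cj: "u \<otimes> conjg j z = conjg j z \<otimes> u"
  proof -
    have "conjg (inv j) u \<otimes> conjg (inv j) (conjg j z) = conjg (inv j) (conjg j z) \<otimes> conjg (inv j) u"
      using j z conjg_inv[of j z] by (simp add: Cz_def)
    then show ?thesis using conjg_comm[of "inv j" u "conjg j z"] j u z by simp
  qed
  have "conjg k x \<otimes> conjg j z = conjg j z \<otimes> conjg k x"
    using trans[of "conjg k x" u "conjg j z"] ck cj u k j x z by simp
  then have "conjg (inv k) (conjg k x) \<otimes> conjg (inv k) (conjg j z) = conjg (inv k) (conjg j z) \<otimes> conjg (inv k) (conjg k x)"
    using conjg_comm[of "inv k" "conjg k x" "conjg j z"] k j x z by simp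
  then have "x \<otimes> conjg (inv k \<otimes> j) z = conjg (inv k \<otimes> j) z \<otimes> x"
    using conjg_inv[of k x] conjg_mult2[of "inv k" j z] k j x z by simp
  moreover have "inv (inv j \<otimes> k) = inv k \<otimes> j" using j k by (simp add: inv_mult_group)
  ultimately have "conjg (inv (inv j \<otimes> k)) z \<in> Cz x" using k j z by (simp add: Cz_def)
  then have "z \<in> Uz x" using z j k by (auto simp: Uz_def)
  then show False using z by simp
qed

lemma Uz_sub: "Uz x \<subseteq> carrier G - {\<one>}"
  by (auto simp: Uz_def)

lemma Uz_big:
  assumes x: "x \<in> carrier G" "x \<noteq> \<one>"
  shows "card (carrier G) \<le> 2 * card (Uz x)"
proof -
  let ?m = "card (Cz x)"
  have "{\<one>, x} \<subseteq> Cz x" using x by (auto simp: Cz_def)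
  moreover have "finite (Cz x)" using fin by (rule finite_subset[rotated]) (auto simp: Cz_def)
  ultimately have "card {\<one>, x} \<le> ?m" by (rule card_mono[rotated])
  then have m2: "2 \<le> ?m" using x by simp
  have c: "card (Uz x) * ?m = card (carrier G) * (?m - 1)" by (rule count[OF x])
  have "?m \<le> 2 * (?m - 1)" using m2 by simp
  then have "card (carrier G) * ?m \<le> card (carrier G) * (2 * (?m - 1))" by (rule mult_le_mono2)
  also have "\<dots> = 2 * (card (Uz x) * ?m)" using c by simp
  finally have "card (carrier G) * ?m \<le> (2 * card (Uz x)) * ?m" by (simp add: algebra_simps)
  then show ?thesis using m2 by simp
qed

theorem all_comm:
  assumes a: "a \<in> carrier G" and b: "b \<in> carrier G"
  shows "a \<otimes> b = b \<otimes> a"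
proof (rule ccontr)
  assume nc: "a \<otimes> b \<noteq> b \<otimes> a"
  then have a1: "a \<noteq> \<one>" using a b by auto
  have b1: "b \<notin> Cz a" using nc b by (auto simp: Cz_def)
  have finC: "finite (Cz a)" using fin by (rule finite_subset[rotated]) (auto simp: Cz_def)
  have CG: "Cz a \<subseteq> carrier G" by (auto simp: Cz_def)
  have "card (Cz a) < card (carrier G)" using b1 b CG fin by (metis psubsetI psubset_card_mono)
  have "\<exists>z \<in> carrier G. z \<noteq> \<one> \<and> z \<notin> Uz a"
  proof (rule ccontr)
    assume "\<not> ?thesis"
    then have "carrier G - {\<one>} \<subseteq> Uz a" by auto
    then have U: "Uz a = carrier G - {\<one>}" using Uz_sub by blast
    have "card (Uz a) = card (carrier G) - 1" using U fin by simp
    moreover have c: "card (Uz a) * card (Cz a) = card (carrier G) * (card (Cz a) - 1)" by (rule count[OF a a1])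
    moreover have "card (carrier G) \<ge> 1" using fin one_closed by (auto simp: Suc_le_eq card_gt_0_iff)
    moreover have "\<one> \<in> Cz a" using a by (simp add: Cz_def)
    then have "card (Cz a) \<ge> 1" using finC by (auto simp: Suc_le_eq card_gt_0_iff)
    ultimately have "card (Cz a) = card (carrier G)"
      using arith_aux by metis
    then show False using \<open>card (Cz a) < card (carrier G)\<close> by simp
  qed
  then obtain z where z: "z \<in> carrier G" "z \<noteq> \<one>" "z \<notin> Uz a" by blast
  have d: "Uz a \<inter> Uz z = {}" by (rule disj[OF a z])
  have "Uz a \<union> Uz z \<subseteq> carrier G - {\<one>}" using Uz_sub by blast
  then have "card (Uz a \<union> Uz z) \<le> card (carrier G - {\<one>})" using fin by (intro card_mono) auto
  moreover have "card (Uz a \<union> Uz z) = card (Uz a) + card (Uz z)"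
    using d fin Uz_sub by (metis card_Un_disjoint finite_Diff finite_subset)
  moreover have "card (carrier G - {\<one>}) = card (carrier G) - 1" using fin by simp
  moreover have "card (carrier G) \<le> 2 * card (Uz a)" by (rule Uz_big[OF a a1])
  moreover have "card (carrier G) \<le> 2 * card (Uz z)" by (rule Uz_big[OF z(1,2)])
  moreover have "card (carrier G) \<ge> 1" using fin one_closed by (auto simp: Suc_le_eq card_gt_0_iff)
  ultimately show False by linarith
qed

end

end

lemma PSL2_mdet: "x \<in> PSL2 \<Longrightarrow> A \<in> x \<Longrightarrow> mdet A = 1"
  by (auto simp: PSL2_def pcls_def sl2_iff)

lemma pmul_PSL2: "x \<in> PSL2 \<Longrightarrow> y \<in> PSL2 \<Longrightarrow> pmul x y \<in> PSL2"
  by (auto elim!: PSL2_E simp: pmul_pcls mdet_mmul intro!: pcls_PSL2)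
lemma pinv_PSL2: "x \<in> PSL2 \<Longrightarrow> pinv x \<in> PSL2"
  by (auto elim!: PSL2_E simp: pinv_pcls intro!: pcls_PSL2)
lemma pone_PSL2: "pone \<in> PSL2"
  by (simp add: pone_def pcls_PSL2)
lemma pmul_assoc: "x \<in> PSL2 \<Longrightarrow> y \<in> PSL2 \<Longrightarrow> z \<in> PSL2 \<Longrightarrow> pmul (pmul x y) z = pmul x (pmul y z)"
  by (auto elim!: PSL2_E simp: pmul_pcls mmul_assoc)
lemma pmul_pone: "x \<in> PSL2 \<Longrightarrow> pmul pone x = x"
  by (auto elim!: PSL2_E simp: pmul_pcls pone_def)
lemma pmul_pinv: "x \<in> PSL2 \<Longrightarrow> pmul (pinv x) x = pone"
  by (auto elim!: PSL2_E simp: pmul_pcls pinv_pcls pone_def minv_left)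

lemma pcls_pone_iff: "pcls A = pone \<longleftrightarrow> A = mid \<or> A = mneg mid"
  by (simp add: pone_def pcls_eq)

lemma mpow_comm: "mmul (mpow A n) A = mmul A (mpow A n)"
  by (induction n) (simp_all add: mmul_assoc)

context
  fixes v :: "'a::field_char_0 \<Rightarrow> int" and G :: "'a psl2 set"
  assumes NLF: "nonarch_local_field v"
    and disc: "discrete_subgroup v G"
    and tor: "no_2_torsion G"
begin

lemma sub: "subgroup_PSL2 G" using disc by (simp add: discrete_subgroup_def)
lemma G_PSL2: "x \<in> G \<Longrightarrow> x \<in> PSL2" using sub by (auto simp: subgroup_PSL2_def)
lemma G_mul: "x \<in> G \<Longrightarrow> y \<in> G \<Longrightarrow> pmul x y \<in> G" using sub by (auto simp: subgroup_PSL2_def)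
lemma G_inv: "x \<in> G \<Longrightarrow> pinv x \<in> G" using sub by (auto simp: subgroup_PSL2_def)
lemma G_one: "pone \<in> G" using sub by (auto simp: subgroup_PSL2_def)

lemma G_ppow: "x \<in> G \<Longrightarrow> ppow x n \<in> G"
  by (induction n) (simp_all add: G_one G_mul)
lemma G_pzpow: "x \<in> G \<Longrightarrow> pzpow x i \<in> G"
  by (simp add: pzpow_def G_ppow G_inv)

lemma invol:
  assumes x: "x \<in> G" "x = pcls X" "mdet X = 1" "mtr X = 0"
  shows "x = pone"
proof -
  have "pmul x x = pcls (mneg mid)" using x by (simp add: pmul_pcls tr0_sq)
  then have "pmul x x = pone" by (simp add: pone_def)
  then show ?thesis using tor x(1) by (simp add: no_2_torsion_def)
qed

lemma nontriv_ns:
  assumes "x = pcls X" "mdet X = 1" "x \<noteq> pone"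
  shows "nonscalar X"
  using assms nonscalar_sl2 pcls_pone_iff by blast

lemma comm_lift:
  assumes x: "x \<in> G" "x = pcls X" "mdet X = 1" "x \<noteq> pone" and y: "y = pcls Y" "mdet Y = 1"
    and c: "pmul x y = pmul y x"
  shows "mmul X Y = mmul Y X"
proof -
  have "mmul X Y = mmul Y X \<or> mmul X Y = mneg (mmul Y X)"
    using c x y by (simp add: pmul_pcls pcls_eq)
  moreover have "mmul X Y \<noteq> mneg (mmul Y X)"
  proof
    assume "mmul X Y = mneg (mmul Y X)"
    then have "mtr X = 0" using anticomm_tr y(2) by blast
    then show False using invol x by blast
  qed
  ultimately show ?thesis by blast
qed

lemma vert_act_mmul: "vert_act (mmul A B) X = vert_act A (vert_act B X)"
  by (simp add: vert_act_def image_image flip: image_mat_act)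
lemma vert_act_mid: "vert_act mid X = X"
  by (simp add: vert_act_def)

lemma Fix_pone: "Fix v pone = BT_vertices v"
proof -
  have cm: "coord mid E = mid" if "mdet E \<noteq> 0" for E :: "'a mat2"
    using einv_left[OF that] by (simp add: coord_def)
  have ci: "cint v (mid :: 'a mat2)" using vint01[OF NLF] by (simp add: cint_def mid_def)
  have "X \<in> Fix v (pcls mid)" if "X \<in> BT_vertices v" for X
    using that Fix_iff[OF NLF mdet_mid, of X] cm ci by auto
  then show ?thesis by (auto simp: pone_def Fix_def)
qed

lemma Fix_mul: "X \<in> Fix v x \<Longrightarrow> X \<in> Fix v y \<Longrightarrow> X \<in> Fix v (pmul x y)"
  by (auto simp: Fix_def pmul_def vert_act_mmul)

lemma Fix_inv: "x \<in> PSL2 \<Longrightarrow> X \<in> Fix v x \<Longrightarrow> X \<in> Fix v (pinv x)"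
proof -
  assume x: "x \<in> PSL2" "X \<in> Fix v x"
  have "vert_act (minv A) X = X" if "A \<in> x" for A
  proof -
    have "vert_act (minv A) X = vert_act (minv A) (vert_act A X)" using x that by (simp add: Fix_def)
    also have "\<dots> = X" using PSL2_mdet[OF x(1) that]
      by (simp flip: vert_act_mmul add: minv_left vert_act_mid)
    finally show ?thesis .
  qed
  then show ?thesis using x by (auto simp: Fix_def pinv_def)
qed

end

definition msmall :: "('a::field \<Rightarrow> int) \<Rightarrow> int \<Rightarrow> 'a mat2 \<Rightarrow> bool" where
  "msmall v n = (\<lambda>(a,b,c,d). vsmall v n a \<and> vsmall v n b \<and> vsmall v n c \<and> vsmall v n d)"
definition msub :: "'a::field mat2 \<Rightarrow> 'a mat2 \<Rightarrow> 'a mat2" where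
  "msub = (\<lambda>(a,b,c,d) (e,f,g,h). (a-e, b-f, c-g, d-h))"

lemma mmul_msub_l: "mmul P (msub Q R) = msub (mmul P Q) (mmul P R)"
  by (cases P; cases Q; cases R) (simp add: mmul_def msub_def algebra_simps)
lemma mmul_msub_r: "mmul (msub Q R) P = msub (mmul Q P) (mmul R P)"
  by (cases P; cases Q; cases R) (simp add: mmul_def msub_def algebra_simps)
lemma near_id_msmall: "near_id v N Z \<longleftrightarrow> msmall v N (msub Z mid)"
  by (cases Z) (simp add: near_id_def msmall_def msub_def mid_def)

lemma einv_right2: "mdet E \<noteq> 0 \<Longrightarrow> mmul E (mmul (einv E) X) = X"
  by (simp flip: mmul_assoc add: einv_right)
lemma einv_left2: "mdet E \<noteq> 0 \<Longrightarrow> mmul (einv E) (mmul E X) = X"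
  by (simp flip: mmul_assoc add: einv_left)
lemma coord_mmul: "mdet E \<noteq> 0 \<Longrightarrow> coord (mmul A B) E = mmul (coord A E) (coord B E)"
  by (simp add: coord_def mmul_assoc einv_right2)
lemma coord_mid: "mdet E \<noteq> 0 \<Longrightarrow> coord mid E = mid"
  by (simp add: coord_def einv_left)
lemma coord_minv:
  assumes dA: "mdet A = 1" and E: "mdet E \<noteq> 0"
  shows "coord (minv A) E = minv (coord A E)"
proof -
  have dM: "mdet (coord A E) = 1" using mdet_coord[OF E] dA by simp
  have "coord (minv A) E = mmul (coord (minv A) E) (mmul (coord A E) (minv (coord A E)))"
    by (simp add: minv_right[OF dM])
  also have "\<dots> = mmul (coord (mmul (minv A) A) E) (minv (coord A E))"
    by (simp add: coord_mmul[OF E] mmul_assoc)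
  also have "\<dots> = minv (coord A E)" by (simp add: minv_left[OF dA] coord_mid[OF E])
  finally show ?thesis .
qed
lemma coord_back: "mdet E \<noteq> 0 \<Longrightarrow> mmul E (mmul (coord Z E) (einv E)) = Z"
  by (simp add: coord_def mmul_assoc einv_right2 einv_right)

lemma lift_ex: "x \<in> PSL2 \<Longrightarrow> \<exists>A. A \<in> x \<and> mdet A = 1 \<and> x = pcls A"
proof -
  assume "x \<in> PSL2"
  then obtain A where "mdet A = 1" "x = pcls A" by (rule PSL2_E)
  moreover have "A \<in> pcls A" by (simp add: pcls_def)
  ultimately show ?thesis by blast
qed

definition lift :: "'a::field psl2 \<Rightarrow> 'a mat2" where
  "lift x = (SOME A. A \<in> x \<and> mdet A = 1 \<and> x = pcls A)"

lemma lift: "x \<in> PSL2 \<Longrightarrow> lift x \<in> x \<and> mdet (lift x) = 1 \<and> x = pcls (lift x)"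
  unfolding lift_def by (rule someI_ex) (rule lift_ex)

lemma pmul_pone_r: "x \<in> PSL2 \<Longrightarrow> pmul x pone = x"
  by (auto elim!: PSL2_E simp: pmul_pcls pone_def)

definition HG :: "('a::field \<Rightarrow> int) \<Rightarrow> 'a psl2 set \<Rightarrow> ('a \<times> 'a) set set \<Rightarrow> 'a psl2 monoid" where
  "HG v G X0 = \<lparr>carrier = {x \<in> G. X0 \<in> Fix v x}, monoid.mult = pmul, one = pone\<rparr>"

context
  fixes v :: "'a::field_char_0 \<Rightarrow> int" and G :: "'a psl2 set"
  assumes NLF: "nonarch_local_field v"
    and disc: "discrete_subgroup v G"
    and tor: "no_2_torsion G"
begin

lemmas G_PSL2' = G_PSL2[OF NLF disc tor]
lemmas G_mul' = G_mul[OF NLF disc tor]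
lemmas G_inv' = G_inv[OF NLF disc tor]
lemmas G_one' = G_one[OF NLF disc tor]
lemmas G_pzpow' = G_pzpow[OF NLF disc tor]
lemmas Fix_mul' = Fix_mul[OF NLF disc tor]
lemmas Fix_inv' = Fix_inv[OF NLF disc tor]
lemmas Fix_pone' = Fix_pone[OF NLF disc tor]
lemmas invol' = invol[OF NLF disc tor]
lemmas comm_lift' = comm_lift[OF NLF disc tor]

lemma msmall_mul: "msmall v n P \<Longrightarrow> msmall v m Q \<Longrightarrow> msmall v (n+m) (mmul P Q)"
  by (cases P; cases Q) (simp add: msmall_def mmul_def vsmall_add[OF NLF] vsmall_mul[OF NLF])
lemma msmall_diff: "msmall v n P \<Longrightarrow> msmall v n Q \<Longrightarrow> msmall v n (msub P Q)"
  by (cases P; cases Q) (simp add: msmall_def msub_def vsmall_diff[OF NLF])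
lemma msmall_mono: "msmall v n P \<Longrightarrow> m \<le> n \<Longrightarrow> msmall v m P"
  by (cases P) (auto simp: msmall_def intro: vsmall_mono[OF NLF])
lemma cint_msmall: "cint v M = msmall v 0 M"
  by (cases M) (simp add: cint_def msmall_def vint_vsmall[OF NLF])
lemma cint_minv: "cint v M \<Longrightarrow> cint v (minv M)"
  by (cases M) (simp add: cint_def minv_def vint_neg[OF NLF])
lemma msmall_ex: "\<exists>n. msmall v n M"
proof -
  obtain a b c d where M: "M = (a,b,c,d)" by (cases M) auto
  obtain na nb nc nd where "vsmall v na a" "vsmall v nb b" "vsmall v nc c" "vsmall v nd d"
    using vsmall_ex[OF NLF] by metis
  then have "msmall v (min (min na nb) (min nc nd)) M"
    by (simp add: M msmall_def) (meson min.cobounded1 min.cobounded2 order_trans vsmall_mono[OF NLF])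
  then show ?thesis by blast
qed

lemma near_lemma:
  assumes E: "mdet E \<noteq> 0" and dA: "mdet A = 1" and dB: "mdet B = 1"
    and cA: "cint v (coord A E)" and sm: "msmall v N (msub (coord B E) (coord A E))"
    and k1: "msmall v K1 E" and k2: "msmall v K2 (einv E)"
  shows "msmall v (K1 + ((0 + N) + K2)) (msub (mmul (minv A) B) mid)"
proof -
  let ?M = "coord A E"
  let ?M' = "coord B E"
  let ?C = "coord (mmul (minv A) B) E"
  have dM: "mdet ?M = 1" using mdet_coord[OF E] dA by simp
  have C: "?C = mmul (minv ?M) ?M'" using coord_mmul[OF E] coord_minv[OF dA E] by simp
  have C2: "msub ?C mid = mmul (minv ?M) (msub ?M' ?M)"
    by (simp add: C mmul_msub_l minv_left[OF dM])
  have s1: "msmall v (0 + N) (msub ?C mid)"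
    unfolding C2 by (rule msmall_mul[OF _ sm]) (use cint_minv[OF cA] cint_msmall in simp)
  have "mmul E (mmul (msub ?C mid) (einv E)) = msub (mmul E (mmul ?C (einv E))) (mmul E (mmul mid (einv E)))"
    by (simp add: mmul_msub_l mmul_msub_r)
  also have "\<dots> = msub (mmul (minv A) B) mid" by (simp add: coord_back[OF E] einv_right[OF E])
  finally have Z: "msub (mmul (minv A) B) mid = mmul E (mmul (msub ?C mid) (einv E))" by simp
  show ?thesis unfolding Z by (rule msmall_mul[OF k1 msmall_mul[OF s1 k2]])
qed

lemma stab_finite:
  assumes X0: "X0 \<in> BT_vertices v"
  shows "finite {x \<in> G. X0 \<in> Fix v x}"
proof -
  obtain e1 e2 where E0: "mdet (emat e1 e2) \<noteq> 0" "X0 = hclass (lattice_of v e1 e2)" using BT_E X0 by blast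
  define E where "E = emat e1 e2"
  have E: "mdet E \<noteq> 0" using E0 by (simp add: E_def)
  obtain N0 where N0: "\<forall>X\<in>G. (\<exists>A\<in>X. near_id v N0 A) \<longrightarrow> X = pone"
    using disc by (auto simp: discrete_subgroup_def)
  obtain K1 where k1: "msmall v K1 E" using msmall_ex by blast
  obtain K2 where k2: "msmall v K2 (einv E)" using msmall_ex by blast
  define N where "N = nat (N0 - K1 - K2)"
  have NN: "N0 \<le> K1 + ((0 + int N) + K2)" by (simp add: N_def)
  obtain S where S: "finite S" "\<forall>z. vsmall v 0 z \<longrightarrow> (\<exists>s\<in>S. vsmall v (int N) (z - s))"
    using reps[OF NLF] by blast
  define rep where "rep z = (SOME s. s \<in> S \<and> vsmall v (int N) (z - s))" for z
  have rep: "rep z \<in> S \<and> vsmall v (int N) (z - rep z)" if "vint v z" for z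
    unfolding rep_def by (rule someI_ex) (use S(2) that vint_vsmall[OF NLF] in auto)
  define mrep where "mrep = (\<lambda>(a,b,c,d). (rep a, rep b, rep c, rep d))"
  define f where "f x = mrep (coord (lift x) E)" for x
  let ?H = "{x \<in> G. X0 \<in> Fix v x}"
  have cl: "cint v (coord (lift x) E)" if "x \<in> ?H" for x
  proof -
    have l: "lift x \<in> x \<and> mdet (lift x) = 1 \<and> x = pcls (lift x)" using lift G_PSL2' that by blast
    then have "X0 \<in> Fix v (pcls (lift x))" using that by simp
    then have "\<forall>e1 e2. mdet (emat e1 e2) \<noteq> 0 \<longrightarrow> X0 = hclass (lattice_of v e1 e2) \<longrightarrow> cint v (coord (lift x) (emat e1 e2))"
      using Fix_iff[OF NLF, of "lift x" X0] l by blast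
    then show ?thesis using E0 unfolding E_def by blast
  qed
  have img: "f ` ?H \<subseteq> S \<times> S \<times> S \<times> S"
  proof (rule image_subsetI)
    fix x assume x: "x \<in> ?H"
    obtain a b c d where M: "coord (lift x) E = (a,b,c,d)" by (cases "coord (lift x) E") auto
    have "cint v (coord (lift x) E)" using cl x by blast
    then have "cint v (a,b,c,d)" using M by simp
    then show "f x \<in> S \<times> S \<times> S \<times> S" using rep by (simp add: f_def M mrep_def cint_def)
  qed
  have inj: "inj_on f ?H"
  proof (rule inj_onI)
    fix x y assume x: "x \<in> ?H" and y: "y \<in> ?H" and fe: "f x = f y"
    define A where "A = lift x"
    define B where "B = lift y"
    have lA: "A \<in> x" "mdet A = 1" "x = pcls A" using lift G_PSL2' x by (auto simp: A_def)
    have lB: "B \<in> y" "mdet B = 1" "y = pcls B" using lift G_PSL2' y by (auto simp: B_def)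
    have cA: "cint v (coord A E)" using cl x by (simp add: A_def)
    have cB: "cint v (coord B E)" using cl y by (simp add: B_def)
    have sm: "msmall v (int N) (msub (coord B E) (coord A E))"
    proof -
      obtain a b c d where M: "coord A E = (a,b,c,d)" by (cases "coord A E") auto
      obtain a' b' c' d' where M': "coord B E = (a',b',c',d')" by (cases "coord B E") auto
      have eq: "rep a = rep a'" "rep b = rep b'" "rep c = rep c'" "rep d = rep d'"
        using fe by (simp_all add: f_def mrep_def M M' flip: A_def B_def)
      have ci: "vint v a" "vint v b" "vint v c" "vint v d" "vint v a'" "vint v b'" "vint v c'" "vint v d'"
        using cA cB by (simp_all add: M M' cint_def)
      have key: "vsmall v (int N) (z' - z)" if "vint v z" "vint v z'" "rep z = rep z'" for z z'
      proof -
        have "z' - z = (z' - rep z') - (z - rep z)" using that(3) by simp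
        then show ?thesis using rep[OF that(1)] rep[OF that(2)] vsmall_diff[OF NLF] by metis
      qed
      show ?thesis using key ci eq by (simp add: M M' msub_def msmall_def)
    qed
    have "msmall v (K1 + ((0 + int N) + K2)) (msub (mmul (minv A) B) mid)"
      by (rule near_lemma[OF E lA(2) lB(2) cA sm k1 k2])
    then have "msmall v N0 (msub (mmul (minv A) B) mid)" using NN by (rule msmall_mono)
    then have ni: "near_id v N0 (mmul (minv A) B)" by (simp add: near_id_msmall)
    have inG: "pmul (pinv x) y \<in> G" using x y G_mul' G_inv' by auto
    have "minv A \<in> pinv x" using lA(1) by (simp add: pinv_def)
    then have "mmul (minv A) B \<in> pmul (pinv x) y" using lB(1) unfolding pmul_def by blast
    then have "pmul (pinv x) y = pone" using N0 inG ni by blast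
    then have "pcls (mmul (minv A) B) = pcls mid" using lA(3) lB(3) by (simp add: pinv_pcls pmul_pcls pone_def)
    then have "mmul (minv A) B = mid \<or> mmul (minv A) B = mneg mid" by (simp add: pcls_eq)
    moreover have "B = mmul A (mmul (minv A) B)" by (simp flip: mmul_assoc add: minv_right[OF lA(2)])
    ultimately have "B = A \<or> B = mneg A"
    proof (elim disjE)
      assume "B = mmul A (mmul (minv A) B)" "mmul (minv A) B = mid"
      then show ?thesis by simp
    next
      assume "B = mmul A (mmul (minv A) B)" "mmul (minv A) B = mneg mid"
      then have "B = mneg (mmul A mid)" by (simp add: mmul_mneg)
      then show ?thesis by simp
    qed
    then show "x = y" using lA(3) lB(3) by auto
  qed
  have "finite (S \<times> S \<times> S \<times> S)" using S(1) by simp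
  then have "finite (f ` ?H)" by (rule finite_subset[OF img])
  then show ?thesis using inj by (rule finite_imageD)
qed

lemma HG_group:
  assumes X0: "X0 \<in> BT_vertices v"
  shows "group (HG v G X0)"
proof (rule groupI)
  show "\<one>\<^bsub>HG v G X0\<^esub> \<in> carrier (HG v G X0)" using X0 by (simp add: HG_def G_one' Fix_pone')
  fix x y z assume x: "x \<in> carrier (HG v G X0)" and y: "y \<in> carrier (HG v G X0)" and z: "z \<in> carrier (HG v G X0)"
  show "x \<otimes>\<^bsub>HG v G X0\<^esub> y \<in> carrier (HG v G X0)" using x y by (simp add: HG_def G_mul' Fix_mul')
  show "x \<otimes>\<^bsub>HG v G X0\<^esub> y \<otimes>\<^bsub>HG v G X0\<^esub> z = x \<otimes>\<^bsub>HG v G X0\<^esub> (y \<otimes>\<^bsub>HG v G X0\<^esub> z)"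
    using x y z by (simp add: HG_def pmul_assoc G_PSL2')
next
  fix x assume x: "x \<in> carrier (HG v G X0)"
  show "\<one>\<^bsub>HG v G X0\<^esub> \<otimes>\<^bsub>HG v G X0\<^esub> x = x" using x by (simp add: HG_def pmul_pone G_PSL2')
  have "pinv x \<in> carrier (HG v G X0)" using x by (simp add: HG_def G_inv' Fix_inv' G_PSL2')
  moreover have "pinv x \<otimes>\<^bsub>HG v G X0\<^esub> x = \<one>\<^bsub>HG v G X0\<^esub>" using x by (simp add: HG_def pmul_pinv G_PSL2')
  ultimately show "\<exists>y\<in>carrier (HG v G X0). y \<otimes>\<^bsub>HG v G X0\<^esub> x = \<one>\<^bsub>HG v G X0\<^esub>" by blast
qed

end

lemma mzpow_mdet: "mdet A = 1 \<Longrightarrow> mdet (mzpow A i) = 1"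
  by (simp add: mzpow_def mpow_mdet)

context
  fixes v :: "'a::field_char_0 \<Rightarrow> int" and G :: "'a psl2 set" and X0 :: "('a \<times> 'a) set set"
  assumes NLF: "nonarch_local_field v"
    and disc: "discrete_subgroup v G"
    and tor: "no_2_torsion G"
    and X0: "X0 \<in> BT_vertices v"
begin

lemmas grp = HG_group[OF NLF disc tor X0]
lemmas G_PSL2'' = G_PSL2[OF NLF disc tor]

lemma HG_simps: "carrier (HG v G X0) = {x \<in> G. X0 \<in> Fix v x}" "monoid.mult (HG v G X0) = pmul"
  "one (HG v G X0) = pone"
  by (simp_all add: HG_def)

lemma HG_inv:
  assumes x: "x \<in> carrier (HG v G X0)"
  shows "inv\<^bsub>HG v G X0\<^esub> x = pinv x"
proof (rule group.inv_equality[OF grp])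
  have xG: "x \<in> G" "X0 \<in> Fix v x" using x by (auto simp: HG_simps)
  show "pinv x \<otimes>\<^bsub>HG v G X0\<^esub> x = \<one>\<^bsub>HG v G X0\<^esub>"
    using pmul_pinv[OF G_PSL2''[OF xG(1)]] by (simp add: HG_simps)
  show "x \<in> carrier (HG v G X0)" using x .
  show "pinv x \<in> carrier (HG v G X0)"
    using G_inv[OF NLF disc tor xG(1)] Fix_inv[OF NLF disc tor G_PSL2''[OF xG(1)] xG(2)] by (simp add: HG_simps)
qed

lemma HG_pow: "x = pcls A \<Longrightarrow> x [^]\<^bsub>HG v G X0\<^esub> (n::nat) = pcls (mpow A n)"
  by (induction n) (simp_all add: HG_simps pone_def pmul_pcls mpow_comm)

lemma HG_trans:
  assumes x: "x \<in> carrier (HG v G X0)" and y: "y \<in> carrier (HG v G X0)" and z: "z \<in> carrier (HG v G X0)"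
    and y1: "y \<noteq> \<one>\<^bsub>HG v G X0\<^esub>"
    and c1: "x \<otimes>\<^bsub>HG v G X0\<^esub> y = y \<otimes>\<^bsub>HG v G X0\<^esub> x" and c2: "y \<otimes>\<^bsub>HG v G X0\<^esub> z = z \<otimes>\<^bsub>HG v G X0\<^esub> y"
  shows "x \<otimes>\<^bsub>HG v G X0\<^esub> z = z \<otimes>\<^bsub>HG v G X0\<^esub> x"
proof -
  have xG: "x \<in> G" and yG: "y \<in> G" and zG: "z \<in> G" using x y z by (auto simp: HG_simps)
  have lx: "mdet (lift x) = 1" "x = pcls (lift x)" using lift G_PSL2'' xG by blast+
  have ly: "mdet (lift y) = 1" "y = pcls (lift y)" using lift G_PSL2'' yG by blast+
  have lz: "mdet (lift z) = 1" "z = pcls (lift z)" using lift G_PSL2'' zG by blast+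
  have y1': "y \<noteq> pone" using y1 by (simp add: HG_simps)
  have "mmul (lift y) (lift x) = mmul (lift x) (lift y)"
    using comm_lift[OF NLF disc tor yG ly(2) ly(1) y1' lx(2) lx(1)] c1 by (simp add: HG_simps)
  then have s1: "inspan (lift y) (lift x)"
    using centralizer nontriv_ns[OF NLF disc tor ly(2) ly(1) y1'] by blast
  have "mmul (lift y) (lift z) = mmul (lift z) (lift y)"
    using comm_lift[OF NLF disc tor yG ly(2) ly(1) y1' lz(2) lz(1)] c2 by (simp add: HG_simps)
  then have s2: "inspan (lift y) (lift z)"
    using centralizer nontriv_ns[OF NLF disc tor ly(2) ly(1) y1'] by blast
  have "mmul (lift x) (lift z) = mmul (lift z) (lift x)" using inspan_comm[OF s1 s2] .
  then have "pmul (pcls (lift x)) (pcls (lift z)) = pmul (pcls (lift z)) (pcls (lift x))"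
    by (simp add: pmul_pcls)
  then show ?thesis using lx lz by (simp add: HG_simps)
qed

lemma HG_norm:
  assumes x: "x \<in> carrier (HG v G X0)" and x1: "x \<noteq> \<one>\<^bsub>HG v G X0\<^esub>" and h: "h \<in> carrier (HG v G X0)"
    and c: "group.conjg (HG v G X0) h x \<otimes>\<^bsub>HG v G X0\<^esub> x = x \<otimes>\<^bsub>HG v G X0\<^esub> group.conjg (HG v G X0) h x"
  shows "h \<otimes>\<^bsub>HG v G X0\<^esub> x = x \<otimes>\<^bsub>HG v G X0\<^esub> h"
proof -
  have xG: "x \<in> G" and hG: "h \<in> G" using x h by (auto simp: HG_simps)
  define X where "X = lift x"
  define Hm where "Hm = lift h"
  have lx: "mdet X = 1" "x = pcls X" using lift G_PSL2'' xG by (auto simp: X_def)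
  have lh: "mdet Hm = 1" "h = pcls Hm" using lift G_PSL2'' hG by (auto simp: Hm_def)
  have x1': "x \<noteq> pone" using x1 by (simp add: HG_simps)
  define Y where "Y = mmul Hm (mmul X (minv Hm))"
  have dY: "mdet Y = 1" using lx lh by (simp add: Y_def mdet_mmul)
  have cj: "group.conjg (HG v G X0) h x = pcls Y"
    using HG_inv[OF h] lx lh
    by (simp add: group.conjg_def[OF grp] HG_simps pinv_pcls pmul_pcls Y_def mmul_assoc)
  have "pmul x (pcls Y) = pmul (pcls Y) x" using c cj by (simp add: HG_simps)
  then have XY: "mmul X Y = mmul Y X"
    using comm_lift[OF NLF disc tor xG lx(2) lx(1) x1' refl dY] by simp
  have ns: "nonscalar X" using nontriv_ns[OF NLF disc tor lx(2) lx(1) x1'] .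
  have fin: "finite (carrier (HG v G X0))" using stab_finite[OF NLF disc tor X0] by (simp add: HG_simps)
  obtain n :: nat where n: "n \<ge> 1" "x [^]\<^bsub>HG v G X0\<^esub> n = \<one>\<^bsub>HG v G X0\<^esub>"
    using group.fin_pow_one[OF grp fin x] by blast
  then have "pcls (mpow X n) = pone" using HG_pow[OF lx(2)] by (simp add: HG_simps)
  then have "mpow X n = mid \<or> mpow X n = mneg mid" by (simp add: pcls_pone_iff)
  then have t4: "mtr X * mtr X \<noteq> 4" using finord_tr[OF lx(1) n(1)] ns by blast
  have "mmul Hm X = mmul X Hm \<or> mtr Hm = 0"
    by (rule norm_mat[OF ns lx(1) lh(1) t4]) (use XY in \<open>simp add: Y_def\<close>)
  then show ?thesis
  proof
    assume "mmul Hm X = mmul X Hm"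
    then show ?thesis using lx lh by (simp add: HG_simps pmul_pcls)
  next
    assume "mtr Hm = 0"
    then have "h = pone" using invol[OF NLF disc tor hG lh(2) lh(1)] by simp
    then show ?thesis using xG G_PSL2'' by (simp add: HG_simps pmul_pone pmul_pone_r)
  qed
qed

lemma HG_comm:
  assumes "a \<in> carrier (HG v G X0)" "b \<in> carrier (HG v G X0)"
  shows "pmul a b = pmul b a"
proof -
  have fin: "finite (carrier (HG v G X0))" using stab_finite[OF NLF disc tor X0] by (simp add: HG_simps)
  have "a \<otimes>\<^bsub>HG v G X0\<^esub> b = b \<otimes>\<^bsub>HG v G X0\<^esub> a"
    by (rule group.all_comm[OF grp fin HG_trans HG_norm assms]; assumption)
  then show ?thesis by (simp add: HG_simps)
qed

end

context
  fixes v :: "'a::field_char_0 \<Rightarrow> int" and G :: "'a psl2 set"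
  assumes NLF: "nonarch_local_field v"
    and disc: "discrete_subgroup v G"
    and tor: "no_2_torsion G"
begin

lemma main_result:
  assumes g: "g \<in> G" and h: "h \<in> G" and eg: "elliptic v g" and eh: "elliptic v h"
  shows "Fall v g \<inter> Fall v h = {} \<or> Fix v g \<subseteq> Fix v h \<or> Fix v h \<subseteq> Fix v g"
proof (cases "Fall v g \<inter> Fall v h = {}")
  case True then show ?thesis by blast
next
  case False
  then obtain X0 where "X0 \<in> Fall v g" "X0 \<in> Fall v h" by blast
  then obtain i j where i: "X0 \<in> Fix v (pzpow g i)" "pzpow g i \<noteq> pone"
    and j: "X0 \<in> Fix v (pzpow h j)" "pzpow h j \<noteq> pone"
    by (auto simp: Fall_def)
  have X0: "X0 \<in> BT_vertices v" using i by (simp add: Fix_def)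
  define A where "A = lift g"
  define B where "B = lift h"
  have lA: "mdet A = 1" "g = pcls A" using lift G_PSL2[OF NLF disc tor g] by (auto simp: A_def)
  have lB: "mdet B = 1" "h = pcls B" using lift G_PSL2[OF NLF disc tor h] by (auto simp: B_def)
  define Ai where "Ai = mzpow A i"
  define Bj where "Bj = mzpow B j"
  have a: "pzpow g i = pcls Ai" using lA by (simp add: Ai_def pzpow_pcls)
  have b: "pzpow h j = pcls Bj" using lB by (simp add: Bj_def pzpow_pcls)
  have dAi: "mdet Ai = 1" using lA by (simp add: Ai_def mzpow_mdet)
  have dBj: "mdet Bj = 1" using lB by (simp add: Bj_def mzpow_mdet)
  have aG: "pzpow g i \<in> G" using G_pzpow[OF NLF disc tor g] .
  have bG: "pzpow h j \<in> G" using G_pzpow[OF NLF disc tor h] .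
  have "pmul (pzpow g i) (pzpow h j) = pmul (pzpow h j) (pzpow g i)"
    by (rule HG_comm[OF NLF disc tor X0]) (use aG bG i j in \<open>simp_all add: HG_simps[OF NLF disc tor X0]\<close>)
  then have c: "mmul Ai Bj = mmul Bj Ai"
    using comm_lift[OF NLF disc tor aG a dAi i(2) b dBj] by simp
  have nsA: "nonscalar Ai" using nontriv_ns[OF NLF disc tor a dAi i(2)] .
  have nsB: "nonscalar Bj" using nontriv_ns[OF NLF disc tor b dBj j(2)] .
  have s1: "inspan Ai Bj" using centralizer[OF nsA c] .
  have s2: "inspan A Ai" using inspan_mzpow[OF lA(1)] by (simp add: Ai_def)
  have s3: "inspan A Bj" using inspan_trans[OF s2 s1] .
  have "inspan B Bj" using inspan_mzpow[OF lB(1)] by (simp add: Bj_def)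
  then have "mmul Bj B = mmul B Bj" using inspan_comm[OF _ inspan_self] by blast
  then have s4: "inspan Bj B" using centralizer[OF nsB] by simp
  have s5: "inspan A B" using inspan_trans[OF s3 s4] .
  have neA: "Fix v (pcls A) \<noteq> {}" using eg lA by (simp add: elliptic_def)
  have neB: "Fix v (pcls B) \<noteq> {}" using eh lB by (simp add: elliptic_def)
  show ?thesis using nest2[OF NLF lA(1) lB(1) s5 neA neB] lA lB by blast
qed

end

theorem lemma2p6:
  fixes v :: "'a::field_char_0 \<Rightarrow> int" and G :: "'a psl2 set" and g h :: "'a psl2"
  assumes "nonarch_local_field v"
    and "discrete_subgroup v G"
    and "no_2_torsion G"
    and "g \<in> G" and "h \<in> G"
    and "elliptic v g" and "elliptic v h"
  shows "Fall v g \<inter> Fall v h = {} \<or> Fix v g \<subseteq> Fix v h \<or> Fix v h \<subseteq> Fix v g"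
  using main_result[OF assms] .


end
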